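(* Let $(\mathcal{C},\Sigma,\mathscr{N})$ be an $n$-angulated category. Let $A_1\xrightarrow{\alpha_1}A_2\xrightarrow{\alpha_2}\cdots\xrightarrow{\alpha_{n-1}}A_n\xrightarrow{\alpha_n}\Sigma A_1$ and $A_1\xrightarrow{\beta_1}B_2\xrightarrow{\beta_2}B_3\to\cdots\xrightarrow{\beta_{n-1}}B_n\xrightarrow{\beta_n}\Sigma A_1$ be $n$-angles and $\varphi_2\colon A_2\to B_2$ a morphism with $\varphi_2\alpha_1=\beta_1$. Suppose $\varphi_3,\dots,\varphi_n$ are morphisms $\varphi_i\colon A_i\to B_i$ such that $(1_{A_1},\varphi_2,\dots,\varphi_n)$ is a morphism of $n$-$\Sigma$-sequences whose mapping cone is an $n$-angle (such $\varphi_i$ exist by (N4)). Then the $n$-$\Sigma$-sequence $$A_2\xrightarrow{\left[\begin{smallmatrix}-\alpha_2\\ \varphi_2\end{smallmatrix}\right]}A_3\oplus B_2\xrightarrow{\left[\begin{smallmatrix}\alpha_3&0\\ \varphi_3&\beta_2\end{smallmatrix}\right]}A_4\oplus B_3\xrightarrow{\left[\begin{smallmatrix}\alpha_4&0\\ -\varphi_4&\beta_3\end{smallmatrix}\right]}\cdots\xrightarrow{\left[\begin{smallmatrix}\alpha_{n-1}&0\\ (-1)^n\varphi_{n-1}&\beta_{n-2}\end{smallmatrix}\right]}A_n\oplus B_{n-1}\xrightarrow{\left[\begin{smallmatrix}(-1)^{n+1}\varphi_n&\beta_{n-1}\end{smallmatrix}\right]}B_n\xrightarrow{\Sigma\alpha_1\circ\beta_n}\Sigma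 A_2,$$ in which for $3\le k\le n-1$ the map $A_k\oplus B_{k-1}\to A_{k+1}\oplus B_k$ is $\left[\begin{smallmatrix}\alpha_k&0\\ (-1)^{k+1}\varphi_k&\beta_{k-1}\end{smallmatrix}\right]$, is an $n$-angle.
   Context: $\mathcal{C}$ is an additive category, $\Sigma$ an automorphism of $\mathcal{C}$, $n\ge3$. An $n$-$\Sigma$-sequence is a diagram $A_1\xrightarrow{\alpha_1}A_2\to\cdots\xrightarrow{\alpha_{n-1}}A_n\xrightarrow{\alpha_n}\Sigma A_1$; its left rotation is $A_2\xrightarrow{\alpha_2}\cdots\xrightarrow{\alpha_n}\Sigma A_1\xrightarrow{(-1)^n\Sigma\alpha_1}\Sigma A_2$. A morphism $(\varphi_1,\dots,\varphi_n)\colon A_\bullet\to B_\bullet$ consists of $\varphi_i\colon A_i\to B_i$ with $\varphi_{i+1}\alpha_i=\beta_i\varphi_i$ ($1\le i\le n-1$) and $\Sigma\varphi_1\alpha_n=\beta_n\varphi_n$; isomorphisms have all $\varphi_i$ invertible. Direct sums are termwise; $A_\bullet$ is a direct summand of $B_\bullet$ if there are morphisms $\varphi\colon A_\bullet\to B_\bullet$, $\psi\colon B_\bullet\to A_\bullet$ with $\psi_i\varphi_i=1$. The mapping cone of a morphism $(\varphi_1,\dots,\varphi_n)\colon A_\bullet\to B_\bullet$ is the $n$-$\Sigma$-sequence $A_2\oplus B_1\xrightarrow{\left[\begin{smallmatrix}-\alpha_2&0\\ \varphi_2&\beta_1\end{smallmatrix}\right]}A_3\oplus B_2\xrightarrow{\left[\begin{smallmatrix}-\alpha_3&0\\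 \varphi_3&\beta_2\end{smallmatrix}\right]}\cdots\xrightarrow{\left[\begin{smallmatrix}-\alpha_n&0\\ \varphi_n&\beta_{n-1}\end{smallmatrix}\right]}\Sigma A_1\oplus B_n\xrightarrow{\left[\begin{smallmatrix}-\Sigma\alpha_1&0\\ \Sigma\varphi_1&\beta_n\end{smallmatrix}\right]}\Sigma A_2\oplus\Sigma B_1$. An $n$-angulated category is a triple $(\mathcal{C},\Sigma,\mathscr{N})$ where $\mathscr{N}$ is a collection of $n$-$\Sigma$-sequences (called $n$-angles) satisfying: (N1)(a) $\mathscr{N}$ is closed under direct sums, direct summands and isomorphisms; (b) $A\xrightarrow{1}A\to0\to\cdots\to0\to\Sigma A$ is in $\mathscr{N}$ for every $A$; (c) every morphism $A_1\to A_2$ is the first morphism of some sequence in $\mathscr{N}$. (N2) a sequence is in $\mathscr{N}$ iff its left rotation is. (N3) given $A_\bullet,B_\bullet\in\mathscr{N}$ and $\varphi_1,\varphi_2$ with $\varphi_2\alpha_1=\beta_1\varphi_1$, there exist $\varphi_3,\dots,\varphi_n$ making $(\varphi_1,\dots,\varphi_n)$ a morphism. (N4) in the situation of (N3), $\varphi_3,\dots,\varphi_n$ can be chosen so that the mapping cone is in $\mathscr{N}$. *)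

theory Defs
  imports Main
begin

text \<open>Data of an additive category (with chosen zero object and chosen binary
biproducts) together with an automorphism \<Sigma> (c_shO on objects, c_shM on morphisms).
c_cmp g f denotes the composite g \<circ> f.\<close>

record ('o,'m) acat =
  c_ob   :: "'o set"
  c_mor  :: "'m set"
  c_dom  :: "'m \<Rightarrow> 'o"
  c_cod  :: "'m \<Rightarrow> 'o"
  c_cmp  :: "'m \<Rightarrow> 'm \<Rightarrow> 'm"
  c_id   :: "'o \<Rightarrow> 'm"
  c_add  :: "'m \<Rightarrow> 'm \<Rightarrow> 'm"
  c_neg  :: "'m \<Rightarrow> 'm"
  c_zer  :: "'o \<Rightarrow> 'o \<Rightarrow> 'm"
  c_zobj :: "'o"
  c_dsum :: "'o \<Rightarrow> 'o \<Rightarrow> 'o"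
  c_in1  :: "'o \<Rightarrow> 'o \<Rightarrow> 'm"
  c_in2  :: "'o \<Rightarrow> 'o \<Rightarrow> 'm"
  c_pr1  :: "'o \<Rightarrow> 'o \<Rightarrow> 'm"
  c_pr2  :: "'o \<Rightarrow> 'o \<Rightarrow> 'm"
  c_shO  :: "'o \<Rightarrow> 'o"
  c_shM  :: "'m \<Rightarrow> 'm"

definition hom :: "('o,'m) acat \<Rightarrow> 'o \<Rightarrow> 'o \<Rightarrow> 'm set" where
  "hom C X Y = {f \<in> c_mor C. c_dom C f = X \<and> c_cod C f = Y}"

definition is_category :: "('o,'m) acat \<Rightarrow> bool" where
  "is_category C \<longleftrightarrow>
     (\<forall>f \<in> c_mor C. c_dom C f \<in> c_ob C \<and> c_cod C f \<in> c_ob C) \<and>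
     (\<forall>X \<in> c_ob C. c_id C X \<in> hom C X X) \<and>
     (\<forall>f \<in> c_mor C. \<forall>g \<in> c_mor C. c_cod C f = c_dom C g \<longrightarrow>
         c_cmp C g f \<in> hom C (c_dom C f) (c_cod C g)) \<and>
     (\<forall>f \<in> c_mor C. \<forall>g \<in> c_mor C. \<forall>h \<in> c_mor C.
         c_cod C f = c_dom C g \<longrightarrow> c_cod C g = c_dom C h \<longrightarrow>
         c_cmp C h (c_cmp C g f) = c_cmp C (c_cmp C h g) f) \<and>
     (\<forall>f \<in> c_mor C. c_cmp C f (c_id C (c_dom C f)) = f \<and> c_cmp C (c_id C (c_cod C f)) f = f)"

definition is_preadditive :: "('o,'m) acat \<Rightarrow> bool" where
  "is_preadditive C \<longleftrightarrow> is_category C \<and>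
     (\<forall>X \<in> c_ob C. \<forall>Y \<in> c_ob C.
        c_zer C X Y \<in> hom C X Y \<and>
        (\<forall>f \<in> hom C X Y. \<forall>g \<in> hom C X Y. c_add C f g \<in> hom C X Y) \<and>
        (\<forall>f \<in> hom C X Y. c_neg C f \<in> hom C X Y) \<and>
        (\<forall>f \<in> hom C X Y. \<forall>g \<in> hom C X Y. \<forall>h \<in> hom C X Y.
            c_add C (c_add C f g) h = c_add C f (c_add C g h)) \<and>
        (\<forall>f \<in> hom C X Y. \<forall>g \<in> hom C X Y. c_add C f g = c_add C g f) \<and>
        (\<forall>f \<in> hom C X Y. c_add C f (c_zer C X Y) = f) \<and>
        (\<forall>f \<in> hom C X Y. c_add C f (c_neg C f) = c_zer C X Y)) \<and>
     (\<forall>X \<in> c_ob C. \<forall>Y \<in> c_ob C. \<forall>Z \<in> c_ob C.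
        (\<forall>f \<in> hom C X Y. \<forall>g \<in> hom C Y Z. \<forall>g' \<in> hom C Y Z.
            c_cmp C (c_add C g g') f = c_add C (c_cmp C g f) (c_cmp C g' f)) \<and>
        (\<forall>f \<in> hom C X Y. \<forall>f' \<in> hom C X Y. \<forall>g \<in> hom C Y Z.
            c_cmp C g (c_add C f f') = c_add C (c_cmp C g f) (c_cmp C g f')))"

definition is_additive :: "('o,'m) acat \<Rightarrow> bool" where
  "is_additive C \<longleftrightarrow> is_preadditive C \<and>
     c_zobj C \<in> c_ob C \<and>
     (\<forall>X \<in> c_ob C. hom C (c_zobj C) X = {c_zer C (c_zobj C) X} \<and>
                   hom C X (c_zobj C) = {c_zer C X (c_zobj C)}) \<and>
     (\<forall>X \<in> c_ob C. \<forall>Y \<in> c_ob C.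
        c_dsum C X Y \<in> c_ob C \<and>
        c_in1 C X Y \<in> hom C X (c_dsum C X Y) \<and>
        c_in2 C X Y \<in> hom C Y (c_dsum C X Y) \<and>
        c_pr1 C X Y \<in> hom C (c_dsum C X Y) X \<and>
        c_pr2 C X Y \<in> hom C (c_dsum C X Y) Y \<and>
        c_cmp C (c_pr1 C X Y) (c_in1 C X Y) = c_id C X \<and>
        c_cmp C (c_pr2 C X Y) (c_in2 C X Y) = c_id C Y \<and>
        c_cmp C (c_pr1 C X Y) (c_in2 C X Y) = c_zer C Y X \<and>
        c_cmp C (c_pr2 C X Y) (c_in1 C X Y) = c_zer C X Y \<and>
        c_add C (c_cmp C (c_in1 C X Y) (c_pr1 C X Y)) (c_cmp C (c_in2 C X Y) (c_pr2 C X Y))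
          = c_id C (c_dsum C X Y))"

definition is_shift_auto :: "('o,'m) acat \<Rightarrow> bool" where
  "is_shift_auto C \<longleftrightarrow>
     (\<forall>f \<in> c_mor C. c_shM C f \<in> hom C (c_shO C (c_dom C f)) (c_shO C (c_cod C f))) \<and>
     (\<forall>X \<in> c_ob C. c_shM C (c_id C X) = c_id C (c_shO C X)) \<and>
     (\<forall>f \<in> c_mor C. \<forall>g \<in> c_mor C. c_cod C f = c_dom C g \<longrightarrow>
         c_shM C (c_cmp C g f) = c_cmp C (c_shM C g) (c_shM C f)) \<and>
     bij_betw (c_shO C) (c_ob C) (c_ob C) \<and>
     bij_betw (c_shM C) (c_mor C) (c_mor C) \<and>
     (\<forall>X \<in> c_ob C. \<forall>Y \<in> c_ob C. \<forall>f \<in> hom C X Y. \<forall>g \<in> hom C X Y.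
         c_shM C (c_add C f g) = c_add C (c_shM C f) (c_shM C g))"

text \<open>An n-\<Sigma>-sequence: objects A 1 .. A n and maps \<alpha> 1 .. \<alpha> n
(values outside 1..n are irrelevant).\<close>
type_synonym ('o,'m) nseq = "(nat \<Rightarrow> 'o) \<times> (nat \<Rightarrow> 'm)"

definition sgnm :: "('o,'m) acat \<Rightarrow> nat \<Rightarrow> 'm \<Rightarrow> 'm" where
  "sgnm C k f = (if even k then f else c_neg C f)"

text \<open>Matrix [a b; c d] : X1 \<oplus> X2 \<rightarrow> Y1 \<oplus> Y2, given source projections p1 p2
and target injections j1 j2.\<close>
definition mat :: "('o,'m) acat \<Rightarrow> 'm \<Rightarrow> 'm \<Rightarrow> 'm \<Rightarrow> 'm \<Rightarrow> 'm \<Rightarrow> 'm \<Rightarrow> 'm \<Rightarrow> 'm \<Rightarrow> 'm" where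
  "mat C p1 p2 j1 j2 a b c d =
     c_add C (c_add C (c_cmp C j1 (c_cmp C a p1)) (c_cmp C j1 (c_cmp C b p2)))
             (c_add C (c_cmp C j2 (c_cmp C c p1)) (c_cmp C j2 (c_cmp C d p2)))"

definition matD :: "('o,'m) acat \<Rightarrow> 'o \<Rightarrow> 'o \<Rightarrow> 'o \<Rightarrow> 'o \<Rightarrow> 'm \<Rightarrow> 'm \<Rightarrow> 'm \<Rightarrow> 'm \<Rightarrow> 'm" where
  "matD C X1 X2 Y1 Y2 a b c d =
     mat C (c_pr1 C X1 X2) (c_pr2 C X1 X2) (c_in1 C Y1 Y2) (c_in2 C Y1 Y2) a b c d"

definition is_seq :: "('o,'m) acat \<Rightarrow> nat \<Rightarrow> ('o,'m) nseq \<Rightarrow> bool" where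
  "is_seq C n S \<longleftrightarrow>
     (\<forall>i \<in> {1..n}. fst S i \<in> c_ob C) \<and>
     (\<forall>i \<in> {1..<n}. snd S i \<in> hom C (fst S i) (fst S (Suc i))) \<and>
     snd S n \<in> hom C (fst S n) (c_shO C (fst S 1))"

definition rot :: "('o,'m) acat \<Rightarrow> nat \<Rightarrow> ('o,'m) nseq \<Rightarrow> ('o,'m) nseq" where
  "rot C n S =
     ((\<lambda>i. if i = n then c_shO C (fst S 1) else fst S (Suc i)),
      (\<lambda>i. if i = n then sgnm C n (c_shM C (snd S 1)) else snd S (Suc i)))"

definition is_smor :: "('o,'m) acat \<Rightarrow> nat \<Rightarrow> ('o,'m) nseq \<Rightarrow> ('o,'m) nseq \<Rightarrow> (nat \<Rightarrow> 'm) \<Rightarrow> bool" where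
  "is_smor C n S T \<phi> \<longleftrightarrow> is_seq C n S \<and> is_seq C n T \<and>
     (\<forall>i \<in> {1..n}. \<phi> i \<in> hom C (fst S i) (fst T i)) \<and>
     (\<forall>i \<in> {1..<n}. c_cmp C (\<phi> (Suc i)) (snd S i) = c_cmp C (snd T i) (\<phi> i)) \<and>
     c_cmp C (c_shM C (\<phi> 1)) (snd S n) = c_cmp C (snd T n) (\<phi> n)"

definition is_siso :: "('o,'m) acat \<Rightarrow> nat \<Rightarrow> ('o,'m) nseq \<Rightarrow> ('o,'m) nseq \<Rightarrow> (nat \<Rightarrow> 'm) \<Rightarrow> bool" where
  "is_siso C n S T \<phi> \<longleftrightarrow> is_smor C n S T \<phi> \<and>
     (\<forall>i \<in> {1..n}. \<exists>\<psi> \<in> hom C (fst T i) (fst S i).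
        c_cmp C \<psi> (\<phi> i) = c_id C (fst S i) \<and> c_cmp C (\<phi> i) \<psi> = c_id C (fst T i))"

text \<open>Termwise direct sum; the last map lands in \<Sigma>(A1 \<oplus> B1), whose biproduct
structure is the \<Sigma>-image of that of A1 \<oplus> B1.\<close>
definition ssum :: "('o,'m) acat \<Rightarrow> nat \<Rightarrow> ('o,'m) nseq \<Rightarrow> ('o,'m) nseq \<Rightarrow> ('o,'m) nseq" where
  "ssum C n S T =
     ((\<lambda>i. c_dsum C (fst S i) (fst T i)),
      (\<lambda>i. if i < n then
             matD C (fst S i) (fst T i) (fst S (Suc i)) (fst T (Suc i))
               (snd S i) (c_zer C (fst T i) (fst S (Suc i)))
               (c_zer C (fst S i) (fst T (Suc i))) (snd T i)
           else
             mat C (c_pr1 C (fst S n) (fst T n)) (c_pr2 C (fst S n) (fst T n))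
               (c_shM C (c_in1 C (fst S 1) (fst T 1))) (c_shM C (c_in2 C (fst S 1) (fst T 1)))
               (snd S n) (c_zer C (fst T n) (c_shO C (fst S 1)))
               (c_zer C (fst S n) (c_shO C (fst T 1))) (snd T n)))"

definition is_summand :: "('o,'m) acat \<Rightarrow> nat \<Rightarrow> ('o,'m) nseq \<Rightarrow> ('o,'m) nseq \<Rightarrow> bool" where
  "is_summand C n S T \<longleftrightarrow> (\<exists>\<phi> \<psi>. is_smor C n S T \<phi> \<and> is_smor C n T S \<psi> \<and>
     (\<forall>i \<in> {1..n}. c_cmp C (\<psi> i) (\<phi> i) = c_id C (fst S i)))"

text \<open>Objects A(i+1) \<oplus> B i (with A(n+1) = \<Sigma>A1);
the last map lands in \<Sigma>(A2 \<oplus> B1) = \<Sigma>A2 \<oplus> \<Sigma>B1 via \<Sigma> of the injections.\<close>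
definition cone :: "('o,'m) acat \<Rightarrow> nat \<Rightarrow> ('o,'m) nseq \<Rightarrow> ('o,'m) nseq \<Rightarrow> (nat \<Rightarrow> 'm) \<Rightarrow> ('o,'m) nseq" where
  "cone C n S T \<phi> =
     (let A = fst S; \<alpha> = snd S; B = fst T; \<beta> = snd T;
          Ax = (\<lambda>i. if i = Suc n then c_shO C (A 1) else A i)
      in ((\<lambda>i. c_dsum C (Ax (Suc i)) (B i)),
          (\<lambda>i. if i < n then
                 matD C (Ax (Suc i)) (B i) (Ax (Suc (Suc i))) (B (Suc i))
                   (c_neg C (\<alpha> (Suc i))) (c_zer C (B i) (Ax (Suc (Suc i))))
                   (\<phi> (Suc i)) (\<beta> i)
               else
                 mat C (c_pr1 C (c_shO C (A 1)) (B n)) (c_pr2 C (c_shO C (A 1)) (B n))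
                   (c_shM C (c_in1 C (A 2) (B 1))) (c_shM C (c_in2 C (A 2) (B 1)))
                   (c_neg C (c_shM C (\<alpha> 1))) (c_zer C (B n) (c_shO C (A 2)))
                   (c_shM C (\<phi> 1)) (\<beta> n))))"

definition triv_seq :: "('o,'m) acat \<Rightarrow> nat \<Rightarrow> 'o \<Rightarrow> ('o,'m) nseq" where
  "triv_seq C n X =
     (let Ob = (\<lambda>i. if i \<le> 2 then X else c_zobj C)
      in (Ob, (\<lambda>i. if i = 1 then c_id C X
                 else if i < n then c_zer C (Ob i) (Ob (Suc i))
                 else c_zer C (c_zobj C) (c_shO C X))))"

definition n_angulated :: "('o,'m) acat \<Rightarrow> nat \<Rightarrow> ('o,'m) nseq set \<Rightarrow> bool" where
  "n_angulated C n N \<longleftrightarrow>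
     is_additive C \<and> is_shift_auto C \<and> 3 \<le> n \<and>
     N \<subseteq> {S. is_seq C n S} \<and>
     \<comment> \<open>(N1)(a)\<close>
     (\<forall>S \<in> N. \<forall>T \<in> N. ssum C n S T \<in> N) \<and>
     (\<forall>S T. T \<in> N \<and> is_seq C n S \<and> is_summand C n S T \<longrightarrow> S \<in> N) \<and>
     (\<forall>S T. S \<in> N \<and> (\<exists>\<phi>. is_siso C n S T \<phi>) \<longrightarrow> T \<in> N) \<and>
     \<comment> \<open>(N1)(b)\<close>
     (\<forall>X \<in> c_ob C. triv_seq C n X \<in> N) \<and>
     \<comment> \<open>(N1)(c)\<close>
     (\<forall>X \<in> c_ob C. \<forall>Y \<in> c_ob C. \<forall>f \<in> hom C X Y.
        \<exists>S \<in> N. fst S 1 = X \<and> fst S 2 = Y \<and> snd S 1 = f) \<and>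
     \<comment> \<open>(N2)\<close>
     (\<forall>S. is_seq C n S \<longrightarrow> (S \<in> N \<longleftrightarrow> rot C n S \<in> N)) \<and>
     \<comment> \<open>(N3)\<close>
     (\<forall>S \<in> N. \<forall>T \<in> N. \<forall>f1 f2.
        f1 \<in> hom C (fst S 1) (fst T 1) \<longrightarrow> f2 \<in> hom C (fst S 2) (fst T 2) \<longrightarrow>
        c_cmp C f2 (snd S 1) = c_cmp C (snd T 1) f1 \<longrightarrow>
        (\<exists>\<phi>. \<phi> 1 = f1 \<and> \<phi> 2 = f2 \<and> is_smor C n S T \<phi>)) \<and>
     \<comment> \<open>(N4)\<close>
     (\<forall>S \<in> N. \<forall>T \<in> N. \<forall>f1 f2.
        f1 \<in> hom C (fst S 1) (fst T 1) \<longrightarrow> f2 \<in> hom C (fst S 2) (fst T 2) \<longrightarrow>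
        c_cmp C f2 (snd S 1) = c_cmp C (snd T 1) f1 \<longrightarrow>
        (\<exists>\<phi>. \<phi> 1 = f1 \<and> \<phi> 2 = f2 \<and> is_smor C n S T \<phi> \<and> cone C n S T \<phi> \<in> N))"

definition lem_seq :: "('o,'m) acat \<Rightarrow> nat \<Rightarrow> (nat \<Rightarrow> 'o) \<Rightarrow> (nat \<Rightarrow> 'm) \<Rightarrow> (nat \<Rightarrow> 'o) \<Rightarrow> (nat \<Rightarrow> 'm) \<Rightarrow> (nat \<Rightarrow> 'm) \<Rightarrow> ('o,'m) nseq" where
  "lem_seq C n A \<alpha> B \<beta> \<phi> =
     ((\<lambda>k. if k = 1 then A 2 else if k < n then c_dsum C (A (Suc k)) (B k) else B n),
      (\<lambda>j. if j = 1 then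
             c_add C (c_cmp C (c_in1 C (A 3) (B 2)) (c_neg C (\<alpha> 2)))
                     (c_cmp C (c_in2 C (A 3) (B 2)) (\<phi> 2))
           else if j < n - 1 then
             matD C (A (Suc j)) (B j) (A (Suc (Suc j))) (B (Suc j))
               (\<alpha> (Suc j)) (c_zer C (B j) (A (Suc (Suc j))))
               (sgnm C j (\<phi> (Suc j))) (\<beta> j)
           else if j = n - 1 then
             c_add C (c_cmp C (sgnm C (Suc n) (\<phi> n)) (c_pr1 C (A n) (B (n - 1))))
                     (c_cmp C (\<beta> (n - 1)) (c_pr2 C (A n) (B (n - 1))))
           else c_cmp C (c_shM C (\<alpha> 1)) (\<beta> n)))"

end

theory Submission
  imports Defs
begin

locale ac =
  fixes C :: "('o,'m) acat"
  assumes addC: "is_additive C" and shC: "is_shift_auto C"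
begin

lemma preC: "is_preadditive C" using addC by (simp add: is_additive_def)
lemma catC: "is_category C" using preC by (simp add: is_preadditive_def)

lemma hom_iff: "f \<in> hom C X Y \<longleftrightarrow> f \<in> c_mor C \<and> c_dom C f = X \<and> c_cod C f = Y"
  by (simp add: hom_def)

lemma dom_ob[simp]: "f \<in> c_mor C \<Longrightarrow> c_dom C f \<in> c_ob C"
  using catC by (simp add: is_category_def)
lemma cod_ob[simp]: "f \<in> c_mor C \<Longrightarrow> c_cod C f \<in> c_ob C"
  using catC by (simp add: is_category_def)

lemma cmp_h: "f \<in> c_mor C \<Longrightarrow> g \<in> c_mor C \<Longrightarrow> c_cod C f = c_dom C g \<Longrightarrow>
   c_cmp C g f \<in> hom C (c_dom C f) (c_cod C g)"
  using catC unfolding is_category_def by blast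
lemma cmp_mor[simp]: "f \<in> c_mor C \<Longrightarrow> g \<in> c_mor C \<Longrightarrow> c_cod C f = c_dom C g \<Longrightarrow> c_cmp C g f \<in> c_mor C"
  using cmp_h by (simp add: hom_def)
lemma cmp_dom[simp]: "f \<in> c_mor C \<Longrightarrow> g \<in> c_mor C \<Longrightarrow> c_cod C f = c_dom C g \<Longrightarrow> c_dom C (c_cmp C g f) = c_dom C f"
  using cmp_h by (simp add: hom_def)
lemma cmp_cod[simp]: "f \<in> c_mor C \<Longrightarrow> g \<in> c_mor C \<Longrightarrow> c_cod C f = c_dom C g \<Longrightarrow> c_cod C (c_cmp C g f) = c_cod C g"
  using cmp_h by (simp add: hom_def)

lemma id_h: "X \<in> c_ob C \<Longrightarrow> c_id C X \<in> hom C X X"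
  using catC unfolding is_category_def by blast
lemma id_mor[simp]: "X \<in> c_ob C \<Longrightarrow> c_id C X \<in> c_mor C"
  and id_dom[simp]: "X \<in> c_ob C \<Longrightarrow> c_dom C (c_id C X) = X"
  and id_cod[simp]: "X \<in> c_ob C \<Longrightarrow> c_cod C (c_id C X) = X"
  using id_h by (auto simp add: hom_def)

lemma assoc[simp]: "f \<in> c_mor C \<Longrightarrow> g \<in> c_mor C \<Longrightarrow> h \<in> c_mor C \<Longrightarrow>
   c_cod C f = c_dom C g \<Longrightarrow> c_cod C g = c_dom C h \<Longrightarrow>
   c_cmp C (c_cmp C h g) f = c_cmp C h (c_cmp C g f)"
  using catC unfolding is_category_def by metis

lemma id_l[simp]: "f \<in> c_mor C \<Longrightarrow> c_cod C f = X \<Longrightarrow> c_cmp C (c_id C X) f = f"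
  using catC unfolding is_category_def by blast
lemma id_r[simp]: "f \<in> c_mor C \<Longrightarrow> c_dom C f = X \<Longrightarrow> c_cmp C f (c_id C X) = f"
  using catC unfolding is_category_def by blast

lemma padd: "X \<in> c_ob C \<Longrightarrow> Y \<in> c_ob C \<Longrightarrow>
        c_zer C X Y \<in> hom C X Y \<and>
        (\<forall>f \<in> hom C X Y. \<forall>g \<in> hom C X Y. c_add C f g \<in> hom C X Y) \<and>
        (\<forall>f \<in> hom C X Y. c_neg C f \<in> hom C X Y) \<and>
        (\<forall>f \<in> hom C X Y. \<forall>g \<in> hom C X Y. \<forall>h \<in> hom C X Y.
            c_add C (c_add C f g) h = c_add C f (c_add C g h)) \<and>
        (\<forall>f \<in> hom C X Y. \<forall>g \<in> hom C X Y. c_add C f g = c_add C g f) \<and>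
        (\<forall>f \<in> hom C X Y. c_add C f (c_zer C X Y) = f) \<and>
        (\<forall>f \<in> hom C X Y. c_add C f (c_neg C f) = c_zer C X Y)"
  using preC unfolding is_preadditive_def by blast

lemma pdist: "X \<in> c_ob C \<Longrightarrow> Y \<in> c_ob C \<Longrightarrow> Z \<in> c_ob C \<Longrightarrow>
        (\<forall>f \<in> hom C X Y. \<forall>g \<in> hom C Y Z. \<forall>g' \<in> hom C Y Z.
            c_cmp C (c_add C g g') f = c_add C (c_cmp C g f) (c_cmp C g' f)) \<and>
        (\<forall>f \<in> hom C X Y. \<forall>f' \<in> hom C X Y. \<forall>g \<in> hom C Y Z.
            c_cmp C g (c_add C f f') = c_add C (c_cmp C g f) (c_cmp C g f'))"
  using preC[unfolded is_preadditive_def, THEN conjunct2, THEN conjunct2] by blast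

lemma zer_mor[simp]: "X \<in> c_ob C \<Longrightarrow> Y \<in> c_ob C \<Longrightarrow> c_zer C X Y \<in> c_mor C"
  and zer_dom[simp]: "X \<in> c_ob C \<Longrightarrow> Y \<in> c_ob C \<Longrightarrow> c_dom C (c_zer C X Y) = X"
  and zer_cod[simp]: "X \<in> c_ob C \<Longrightarrow> Y \<in> c_ob C \<Longrightarrow> c_cod C (c_zer C X Y) = Y"
  using padd[of X Y] by (auto simp: hom_def)

lemma add_h: "f \<in> c_mor C \<Longrightarrow> g \<in> c_mor C \<Longrightarrow> c_dom C g = c_dom C f \<Longrightarrow> c_cod C g = c_cod C f \<Longrightarrow>
   c_add C f g \<in> hom C (c_dom C f) (c_cod C f)"
  using padd[of "c_dom C f" "c_cod C f"] by (auto simp: hom_def)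
lemma add_mor[simp]: "f \<in> c_mor C \<Longrightarrow> g \<in> c_mor C \<Longrightarrow> c_dom C g = c_dom C f \<Longrightarrow> c_cod C g = c_cod C f \<Longrightarrow> c_add C f g \<in> c_mor C"
  and add_dom[simp]: "f \<in> c_mor C \<Longrightarrow> g \<in> c_mor C \<Longrightarrow> c_dom C g = c_dom C f \<Longrightarrow> c_cod C g = c_cod C f \<Longrightarrow> c_dom C (c_add C f g) = c_dom C f"
  and add_cod[simp]: "f \<in> c_mor C \<Longrightarrow> g \<in> c_mor C \<Longrightarrow> c_dom C g = c_dom C f \<Longrightarrow> c_cod C g = c_cod C f \<Longrightarrow> c_cod C (c_add C f g) = c_cod C f"
  using add_h by (auto simp: hom_def)

lemma neg_h: "f \<in> c_mor C \<Longrightarrow> c_neg C f \<in> hom C (c_dom C f) (c_cod C f)"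
  using padd[of "c_dom C f" "c_cod C f"] by (auto simp: hom_def)
lemma neg_mor[simp]: "f \<in> c_mor C \<Longrightarrow> c_neg C f \<in> c_mor C"
  and neg_dom[simp]: "f \<in> c_mor C \<Longrightarrow> c_dom C (c_neg C f) = c_dom C f"
  and neg_cod[simp]: "f \<in> c_mor C \<Longrightarrow> c_cod C (c_neg C f) = c_cod C f"
  using neg_h by (auto simp: hom_def)

lemma add_assoc[simp]: "f \<in> c_mor C \<Longrightarrow> g \<in> c_mor C \<Longrightarrow> h \<in> c_mor C \<Longrightarrow>
   c_dom C g = c_dom C f \<Longrightarrow> c_cod C g = c_cod C f \<Longrightarrow> c_dom C h = c_dom C f \<Longrightarrow> c_cod C h = c_cod C f \<Longrightarrow>
   c_add C (c_add C f g) h = c_add C f (c_add C g h)"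
  using padd[of "c_dom C f" "c_cod C f"] by (auto simp: hom_def)
lemma add_comm: "f \<in> c_mor C \<Longrightarrow> g \<in> c_mor C \<Longrightarrow>
   c_dom C g = c_dom C f \<Longrightarrow> c_cod C g = c_cod C f \<Longrightarrow> c_add C f g = c_add C g f"
  using padd[of "c_dom C f" "c_cod C f"] by (auto simp: hom_def)
lemma add_zr[simp]: "f \<in> c_mor C \<Longrightarrow> c_dom C f = X \<Longrightarrow> c_cod C f = Y \<Longrightarrow> c_add C f (c_zer C X Y) = f"
  using padd[of "c_dom C f" "c_cod C f"] by (auto simp: hom_def)
lemma add_zl[simp]: "f \<in> c_mor C \<Longrightarrow> c_dom C f = X \<Longrightarrow> c_cod C f = Y \<Longrightarrow> c_add C (c_zer C X Y) f = f"
  using add_zr add_comm by (metis cod_ob dom_ob zer_cod zer_dom zer_mor)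
lemma add_negr[simp]: "f \<in> c_mor C \<Longrightarrow> c_add C f (c_neg C f) = c_zer C (c_dom C f) (c_cod C f)"
  using padd[of "c_dom C f" "c_cod C f"] by (auto simp: hom_def)
lemma add_negl[simp]: "f \<in> c_mor C \<Longrightarrow> c_add C (c_neg C f) f = c_zer C (c_dom C f) (c_cod C f)"
  using add_negr add_comm by (metis neg_cod neg_dom neg_mor)

lemma dist_r[simp]: "f \<in> c_mor C \<Longrightarrow> g \<in> c_mor C \<Longrightarrow> g' \<in> c_mor C \<Longrightarrow> c_cod C f = c_dom C g \<Longrightarrow>
   c_dom C g' = c_dom C g \<Longrightarrow> c_cod C g' = c_cod C g \<Longrightarrow>
   c_cmp C (c_add C g g') f = c_add C (c_cmp C g f) (c_cmp C g' f)"
  using pdist[of "c_dom C f" "c_cod C f" "c_cod C g"] by (auto simp: hom_def)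
lemma dist_l[simp]: "f \<in> c_mor C \<Longrightarrow> f' \<in> c_mor C \<Longrightarrow> g \<in> c_mor C \<Longrightarrow> c_cod C f = c_dom C g \<Longrightarrow>
   c_dom C f' = c_dom C f \<Longrightarrow> c_cod C f' = c_cod C f \<Longrightarrow>
   c_cmp C g (c_add C f f') = c_add C (c_cmp C g f) (c_cmp C g f')"
  using pdist[of "c_dom C f" "c_cod C f" "c_cod C g"] by (auto simp: hom_def)

lemma idem_zero: "x \<in> c_mor C \<Longrightarrow> c_add C x x = x \<Longrightarrow> x = c_zer C (c_dom C x) (c_cod C x)"
proof -
  assume m: "x \<in> c_mor C" and e: "c_add C x x = x"
  have "c_zer C (c_dom C x) (c_cod C x) = c_add C x (c_neg C x)" using m by simp
  also have "\<dots> = c_add C (c_add C x x) (c_neg C x)" using e by simp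
  also have "\<dots> = c_add C x (c_add C x (c_neg C x))" using m by (subst add_assoc) auto
  also have "\<dots> = x" using m by simp
  finally show ?thesis by simp
qed

lemma cmp_zr[simp]: "f \<in> c_mor C \<Longrightarrow> c_dom C f = Y \<Longrightarrow> X \<in> c_ob C \<Longrightarrow> c_cmp C f (c_zer C X Y) = c_zer C X (c_cod C f)"
proof -
  assume m: "f \<in> c_mor C" and d: "c_dom C f = Y" and X: "X \<in> c_ob C"
  have Y: "Y \<in> c_ob C" using m d by auto
  let ?x = "c_cmp C f (c_zer C X Y)"
  have "c_add C ?x ?x = c_cmp C f (c_add C (c_zer C X Y) (c_zer C X Y))"
    using m d X Y by (subst dist_l) auto
  also have "\<dots> = ?x" using X Y by simp
  finally have "?x = c_zer C (c_dom C ?x) (c_cod C ?x)" using m d X Y by (intro idem_zero) auto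
  then show ?thesis using m d X Y by simp
qed
lemma cmp_zl[simp]: "f \<in> c_mor C \<Longrightarrow> c_cod C f = Y \<Longrightarrow> Z \<in> c_ob C \<Longrightarrow> c_cmp C (c_zer C Y Z) f = c_zer C (c_dom C f) Z"
proof -
  assume m: "f \<in> c_mor C" and d: "c_cod C f = Y" and Z: "Z \<in> c_ob C"
  have Y: "Y \<in> c_ob C" using m d by auto
  let ?x = "c_cmp C (c_zer C Y Z) f"
  have "c_add C ?x ?x = c_cmp C (c_add C (c_zer C Y Z) (c_zer C Y Z)) f"
    using m d Z Y by (subst dist_r) auto
  also have "\<dots> = ?x" using Z Y by simp
  finally have "?x = c_zer C (c_dom C ?x) (c_cod C ?x)" using m d Z Y by (intro idem_zero) auto
  then show ?thesis using m d Z Y by simp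
qed

lemma neg_unique: "f \<in> c_mor C \<Longrightarrow> g \<in> c_mor C \<Longrightarrow> c_dom C g = c_dom C f \<Longrightarrow> c_cod C g = c_cod C f \<Longrightarrow>
   c_add C f g = c_zer C (c_dom C f) (c_cod C f) \<Longrightarrow> g = c_neg C f"
proof -
  assume m: "f \<in> c_mor C" "g \<in> c_mor C" "c_dom C g = c_dom C f" "c_cod C g = c_cod C f"
    and e: "c_add C f g = c_zer C (c_dom C f) (c_cod C f)"
  have "g = c_add C (c_add C (c_neg C f) f) g" using m by simp
  also have "\<dots> = c_add C (c_neg C f) (c_add C f g)" using m by (subst add_assoc) auto
  also have "\<dots> = c_neg C f" using m e by simp
  finally show ?thesis .
qed

lemma neg_neg[simp]: "f \<in> c_mor C \<Longrightarrow> c_neg C (c_neg C f) = f"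
  using neg_unique[of "c_neg C f" f] by simp

lemma neg_zer[simp]: "X \<in> c_ob C \<Longrightarrow> Y \<in> c_ob C \<Longrightarrow> c_neg C (c_zer C X Y) = c_zer C X Y"
  using neg_unique[of "c_zer C X Y" "c_zer C X Y"] by simp

lemma neg_cmpl[simp]: "f \<in> c_mor C \<Longrightarrow> g \<in> c_mor C \<Longrightarrow> c_cod C f = c_dom C g \<Longrightarrow>
   c_cmp C (c_neg C g) f = c_neg C (c_cmp C g f)"
proof -
  assume m: "f \<in> c_mor C" "g \<in> c_mor C" "c_cod C f = c_dom C g"
  have "c_add C (c_cmp C g f) (c_cmp C (c_neg C g) f) = c_cmp C (c_add C g (c_neg C g)) f"
    using m by (subst dist_r) auto
  also have "\<dots> = c_zer C (c_dom C f) (c_cod C g)" using m by simp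
  finally show ?thesis using m by (intro neg_unique) auto
qed
lemma neg_cmpr[simp]: "f \<in> c_mor C \<Longrightarrow> g \<in> c_mor C \<Longrightarrow> c_cod C f = c_dom C g \<Longrightarrow>
   c_cmp C g (c_neg C f) = c_neg C (c_cmp C g f)"
proof -
  assume m: "f \<in> c_mor C" "g \<in> c_mor C" "c_cod C f = c_dom C g"
  have "c_add C (c_cmp C g f) (c_cmp C g (c_neg C f)) = c_cmp C g (c_add C f (c_neg C f))"
    using m by (subst dist_l) auto
  also have "\<dots> = c_zer C (c_dom C f) (c_cod C g)" using m by simp
  finally show ?thesis using m by (intro neg_unique) auto
qed


end

context ac begin
lemma add_lcomm: "f \<in> c_mor C \<Longrightarrow> g \<in> c_mor C \<Longrightarrow> h \<in> c_mor C \<Longrightarrow>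
   c_dom C g = c_dom C f \<Longrightarrow> c_cod C g = c_cod C f \<Longrightarrow> c_dom C h = c_dom C f \<Longrightarrow> c_cod C h = c_cod C f \<Longrightarrow>
   c_add C f (c_add C g h) = c_add C g (c_add C f h)"
  by (metis add_assoc add_comm)

lemmas addAC = add_comm add_lcomm

section \<open>Shift\<close>

lemmas shP = shC[unfolded is_shift_auto_def]
lemma shO_ob[simp]: "X \<in> c_ob C \<Longrightarrow> c_shO C X \<in> c_ob C"
  using shP[THEN conjunct2, THEN conjunct2, THEN conjunct2, THEN conjunct1] unfolding bij_betw_def by blast
lemma sh_h: "f \<in> c_mor C \<Longrightarrow> c_shM C f \<in> hom C (c_shO C (c_dom C f)) (c_shO C (c_cod C f))"
  using shP[THEN conjunct1] by blast
lemma sh_mor[simp]: "f \<in> c_mor C \<Longrightarrow> c_shM C f \<in> c_mor C"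
  and sh_dom[simp]: "f \<in> c_mor C \<Longrightarrow> c_dom C (c_shM C f) = c_shO C (c_dom C f)"
  and sh_cod[simp]: "f \<in> c_mor C \<Longrightarrow> c_cod C (c_shM C f) = c_shO C (c_cod C f)"
  using sh_h by (auto simp: hom_def)
lemma sh_id[simp]: "X \<in> c_ob C \<Longrightarrow> c_shM C (c_id C X) = c_id C (c_shO C X)"
  using shP[THEN conjunct2, THEN conjunct1] by blast
lemma sh_cmp[simp]: "f \<in> c_mor C \<Longrightarrow> g \<in> c_mor C \<Longrightarrow> c_cod C f = c_dom C g \<Longrightarrow>
  c_shM C (c_cmp C g f) = c_cmp C (c_shM C g) (c_shM C f)"
  using shP[THEN conjunct2, THEN conjunct2, THEN conjunct1] by blast
lemma sh_add[simp]: "f \<in> c_mor C \<Longrightarrow> g \<in> c_mor C \<Longrightarrow> c_dom C g = c_dom C f \<Longrightarrow> c_cod C g = c_cod C f \<Longrightarrow>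
  c_shM C (c_add C f g) = c_add C (c_shM C f) (c_shM C g)"
proof -
  assume m: "f \<in> c_mor C" "g \<in> c_mor C" "c_dom C g = c_dom C f" "c_cod C g = c_cod C f"
  have "\<forall>X \<in> c_ob C. \<forall>Y \<in> c_ob C. \<forall>f \<in> hom C X Y. \<forall>g \<in> hom C X Y.
         c_shM C (c_add C f g) = c_add C (c_shM C f) (c_shM C g)"
    using shP[THEN conjunct2, THEN conjunct2, THEN conjunct2, THEN conjunct2, THEN conjunct2] by blast
  then show ?thesis using m dom_ob[of f] cod_ob[of f] unfolding hom_def by blast
qed
lemma sh_zer[simp]: "X \<in> c_ob C \<Longrightarrow> Y \<in> c_ob C \<Longrightarrow> c_shM C (c_zer C X Y) = c_zer C (c_shO C X) (c_shO C Y)"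
proof -
  assume o: "X \<in> c_ob C" "Y \<in> c_ob C"
  have "c_add C (c_shM C (c_zer C X Y)) (c_shM C (c_zer C X Y)) = c_shM C (c_zer C X Y)"
  proof -
    have "c_add C (c_shM C (c_zer C X Y)) (c_shM C (c_zer C X Y)) = c_shM C (c_add C (c_zer C X Y) (c_zer C X Y))"
      using o by (intro sh_add[symmetric]) auto
    also have "\<dots> = c_shM C (c_zer C X Y)" using o by simp
    finally show ?thesis .
  qed
  then show ?thesis using o idem_zero[of "c_shM C (c_zer C X Y)"] by simp
qed
lemma sh_neg[simp]: "f \<in> c_mor C \<Longrightarrow> c_shM C (c_neg C f) = c_neg C (c_shM C f)"
proof -
  assume m: "f \<in> c_mor C"
  have "c_add C (c_shM C f) (c_shM C (c_neg C f)) = c_zer C (c_dom C (c_shM C f)) (c_cod C (c_shM C f))"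
    using m by (simp flip: sh_add)
  then show ?thesis using m by (intro neg_unique) auto
qed

section \<open>Biproducts\<close>

lemma dsum_facts: "X \<in> c_ob C \<Longrightarrow> Y \<in> c_ob C \<Longrightarrow>
        c_dsum C X Y \<in> c_ob C \<and>
        c_in1 C X Y \<in> hom C X (c_dsum C X Y) \<and>
        c_in2 C X Y \<in> hom C Y (c_dsum C X Y) \<and>
        c_pr1 C X Y \<in> hom C (c_dsum C X Y) X \<and>
        c_pr2 C X Y \<in> hom C (c_dsum C X Y) Y \<and>
        c_cmp C (c_pr1 C X Y) (c_in1 C X Y) = c_id C X \<and>
        c_cmp C (c_pr2 C X Y) (c_in2 C X Y) = c_id C Y \<and>
        c_cmp C (c_pr1 C X Y) (c_in2 C X Y) = c_zer C Y X \<and>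
        c_cmp C (c_pr2 C X Y) (c_in1 C X Y) = c_zer C X Y \<and>
        c_add C (c_cmp C (c_in1 C X Y) (c_pr1 C X Y)) (c_cmp C (c_in2 C X Y) (c_pr2 C X Y))
          = c_id C (c_dsum C X Y)"
  using addC[unfolded is_additive_def, THEN conjunct2, THEN conjunct2, THEN conjunct2] by blast

lemma dsum_ob[simp]: "X \<in> c_ob C \<Longrightarrow> Y \<in> c_ob C \<Longrightarrow> c_dsum C X Y \<in> c_ob C"
  using dsum_facts by blast
lemma in1_mor[simp]: "X \<in> c_ob C \<Longrightarrow> Y \<in> c_ob C \<Longrightarrow> c_in1 C X Y \<in> c_mor C"
  and in1_dom[simp]: "X \<in> c_ob C \<Longrightarrow> Y \<in> c_ob C \<Longrightarrow> c_dom C (c_in1 C X Y) = X"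
  and in1_cod[simp]: "X \<in> c_ob C \<Longrightarrow> Y \<in> c_ob C \<Longrightarrow> c_cod C (c_in1 C X Y) = c_dsum C X Y"
  and in2_mor[simp]: "X \<in> c_ob C \<Longrightarrow> Y \<in> c_ob C \<Longrightarrow> c_in2 C X Y \<in> c_mor C"
  and in2_dom[simp]: "X \<in> c_ob C \<Longrightarrow> Y \<in> c_ob C \<Longrightarrow> c_dom C (c_in2 C X Y) = Y"
  and in2_cod[simp]: "X \<in> c_ob C \<Longrightarrow> Y \<in> c_ob C \<Longrightarrow> c_cod C (c_in2 C X Y) = c_dsum C X Y"
  and pr1_mor[simp]: "X \<in> c_ob C \<Longrightarrow> Y \<in> c_ob C \<Longrightarrow> c_pr1 C X Y \<in> c_mor C"
  and pr1_dom[simp]: "X \<in> c_ob C \<Longrightarrow> Y \<in> c_ob C \<Longrightarrow> c_dom C (c_pr1 C X Y) = c_dsum C X Y"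
  and pr1_cod[simp]: "X \<in> c_ob C \<Longrightarrow> Y \<in> c_ob C \<Longrightarrow> c_cod C (c_pr1 C X Y) = X"
  and pr2_mor[simp]: "X \<in> c_ob C \<Longrightarrow> Y \<in> c_ob C \<Longrightarrow> c_pr2 C X Y \<in> c_mor C"
  and pr2_dom[simp]: "X \<in> c_ob C \<Longrightarrow> Y \<in> c_ob C \<Longrightarrow> c_dom C (c_pr2 C X Y) = c_dsum C X Y"
  and pr2_cod[simp]: "X \<in> c_ob C \<Longrightarrow> Y \<in> c_ob C \<Longrightarrow> c_cod C (c_pr2 C X Y) = Y"
  using dsum_facts[of X Y] by (auto simp: hom_def)

definition bip :: "'m \<Rightarrow> 'm \<Rightarrow> 'm \<Rightarrow> 'm \<Rightarrow> bool" where
  "bip p1 p2 j1 j2 \<longleftrightarrow> p1 \<in> c_mor C \<and> p2 \<in> c_mor C \<and> j1 \<in> c_mor C \<and> j2 \<in> c_mor C \<and>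
     c_dom C p2 = c_dom C p1 \<and> c_cod C j1 = c_dom C p1 \<and> c_cod C j2 = c_dom C p1 \<and>
     c_dom C j1 = c_cod C p1 \<and> c_dom C j2 = c_cod C p2 \<and>
     c_cmp C p1 j1 = c_id C (c_cod C p1) \<and> c_cmp C p2 j2 = c_id C (c_cod C p2) \<and>
     c_cmp C p1 j2 = c_zer C (c_cod C p2) (c_cod C p1) \<and>
     c_cmp C p2 j1 = c_zer C (c_cod C p1) (c_cod C p2) \<and>
     c_add C (c_cmp C j1 p1) (c_cmp C j2 p2) = c_id C (c_dom C p1)"

lemma bip_dsum[simp]: "X \<in> c_ob C \<Longrightarrow> Y \<in> c_ob C \<Longrightarrow> bip (c_pr1 C X Y) (c_pr2 C X Y) (c_in1 C X Y) (c_in2 C X Y)"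
  using dsum_facts[of X Y] by (simp add: bip_def)

lemma bip_sh[simp]: assumes b: "bip p1 p2 j1 j2" shows "bip (c_shM C p1) (c_shM C p2) (c_shM C j1) (c_shM C j2)"
proof -
  have a: "p1 \<in> c_mor C" "p2 \<in> c_mor C" "j1 \<in> c_mor C" "j2 \<in> c_mor C"
     "c_dom C p2 = c_dom C p1" "c_cod C j1 = c_dom C p1" "c_cod C j2 = c_dom C p1"
     "c_dom C j1 = c_cod C p1" "c_dom C j2 = c_cod C p2"
     and e: "c_cmp C p1 j1 = c_id C (c_cod C p1)" "c_cmp C p2 j2 = c_id C (c_cod C p2)"
     "c_cmp C p1 j2 = c_zer C (c_cod C p2) (c_cod C p1)"
     "c_cmp C p2 j1 = c_zer C (c_cod C p1) (c_cod C p2)"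
     "c_add C (c_cmp C j1 p1) (c_cmp C j2 p2) = c_id C (c_dom C p1)"
    using b unfolding bip_def by blast+
  have e1: "c_cmp C (c_shM C p1) (c_shM C j1) = c_id C (c_cod C (c_shM C p1))"
    using a by (simp flip: sh_cmp add: e)
  have e2: "c_cmp C (c_shM C p2) (c_shM C j2) = c_id C (c_cod C (c_shM C p2))"
    using a by (simp flip: sh_cmp add: e)
  have e3: "c_cmp C (c_shM C p1) (c_shM C j2) = c_zer C (c_cod C (c_shM C p2)) (c_cod C (c_shM C p1))"
    using a by (simp flip: sh_cmp add: e)
  have e4: "c_cmp C (c_shM C p2) (c_shM C j1) = c_zer C (c_cod C (c_shM C p1)) (c_cod C (c_shM C p2))"
    using a by (simp flip: sh_cmp add: e)
  have "c_shM C (c_add C (c_cmp C j1 p1) (c_cmp C j2 p2)) = c_id C (c_shO C (c_dom C p1))"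
    using a by (simp only: e(5)) simp
  then have e5: "c_add C (c_cmp C (c_shM C j1) (c_shM C p1)) (c_cmp C (c_shM C j2) (c_shM C p2)) =
    c_id C (c_dom C (c_shM C p1))" using a by simp
  show ?thesis unfolding bip_def using a e1 e2 e3 e4 e5 by simp
qed

end

context ac begin

lemma bipD: assumes "bip p1 p2 j1 j2" shows
   "p1 \<in> c_mor C" "p2 \<in> c_mor C" "j1 \<in> c_mor C" "j2 \<in> c_mor C"
     "c_dom C p2 = c_dom C p1" "c_cod C j1 = c_dom C p1" "c_cod C j2 = c_dom C p1"
     "c_dom C j1 = c_cod C p1" "c_dom C j2 = c_cod C p2"
     "c_cmp C p1 j1 = c_id C (c_cod C p1)" "c_cmp C p2 j2 = c_id C (c_cod C p2)"
     "c_cmp C p1 j2 = c_zer C (c_cod C p2) (c_cod C p1)"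
     "c_cmp C p2 j1 = c_zer C (c_cod C p1) (c_cod C p2)"
     "c_add C (c_cmp C j1 p1) (c_cmp C j2 p2) = c_id C (c_dom C p1)"
  using assms unfolding bip_def by blast+

lemma bip_canc: assumes b: "bip p1 p2 j1 j2" shows
  "\<And>x. x \<in> c_mor C \<Longrightarrow> c_cod C x = c_cod C p1 \<Longrightarrow> c_cmp C p1 (c_cmp C j1 x) = x"
  "\<And>x. x \<in> c_mor C \<Longrightarrow> c_cod C x = c_cod C p2 \<Longrightarrow> c_cmp C p2 (c_cmp C j2 x) = x"
  "\<And>x. x \<in> c_mor C \<Longrightarrow> c_cod C x = c_cod C p2 \<Longrightarrow> c_cmp C p1 (c_cmp C j2 x) = c_zer C (c_dom C x) (c_cod C p1)"
  "\<And>x. x \<in> c_mor C \<Longrightarrow> c_cod C x = c_cod C p1 \<Longrightarrow> c_cmp C p2 (c_cmp C j1 x) = c_zer C (c_dom C x) (c_cod C p2)"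
  using bipD[OF b] by (simp_all flip: assoc)

definition col where "col j1 j2 a c = c_add C (c_cmp C j1 a) (c_cmp C j2 c)"
definition row where "row p1 p2 a b = c_add C (c_cmp C a p1) (c_cmp C b p2)"

lemma mat_mat:
  assumes b: "bip q1 q2 k1 k2"
  and m: "p1 \<in> c_mor C" "p2 \<in> c_mor C" "j1 \<in> c_mor C" "j2 \<in> c_mor C"
     "a \<in> c_mor C" "b \<in> c_mor C" "c \<in> c_mor C" "d \<in> c_mor C"
     "a' \<in> c_mor C" "b' \<in> c_mor C" "c' \<in> c_mor C" "d' \<in> c_mor C"
  and t: "c_dom C p2 = c_dom C p1" "c_cod C j2 = c_cod C j1"
     "c_dom C a = c_cod C p1" "c_dom C b = c_cod C p2" "c_dom C c = c_cod C p1" "c_dom C d = c_cod C p2"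
     "c_cod C a = c_cod C q1" "c_cod C b = c_cod C q1" "c_cod C c = c_cod C q2" "c_cod C d = c_cod C q2"
     "c_dom C a' = c_cod C q1" "c_dom C b' = c_cod C q2" "c_dom C c' = c_cod C q1" "c_dom C d' = c_cod C q2"
     "c_cod C a' = c_dom C j1" "c_cod C b' = c_dom C j1" "c_cod C c' = c_dom C j2" "c_cod C d' = c_dom C j2"
  shows "c_cmp C (mat C q1 q2 j1 j2 a' b' c' d') (mat C p1 p2 k1 k2 a b c d) =
     mat C p1 p2 j1 j2 (c_add C (c_cmp C a' a) (c_cmp C b' c)) (c_add C (c_cmp C a' b) (c_cmp C b' d))
                       (c_add C (c_cmp C c' a) (c_cmp C d' c)) (c_add C (c_cmp C c' b) (c_cmp C d' d))"
  using bipD[OF b] m t unfolding mat_def by (simp add: bip_canc[OF b] addAC)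

end

context ac begin

lemma mat_typ:
  assumes m: "p1 \<in> c_mor C" "p2 \<in> c_mor C" "j1 \<in> c_mor C" "j2 \<in> c_mor C"
     "a \<in> c_mor C" "b \<in> c_mor C" "c \<in> c_mor C" "d \<in> c_mor C"
  and t: "c_dom C p2 = c_dom C p1" "c_cod C j2 = c_cod C j1"
     "c_dom C a = c_cod C p1" "c_dom C b = c_cod C p2" "c_dom C c = c_cod C p1" "c_dom C d = c_cod C p2"
     "c_cod C a = c_dom C j1" "c_cod C b = c_dom C j1" "c_cod C c = c_dom C j2" "c_cod C d = c_dom C j2"
  shows "mat C p1 p2 j1 j2 a b c d \<in> hom C (c_dom C p1) (c_cod C j1)"
  using m t unfolding mat_def hom_iff by simp

lemma col_typ:
  assumes m: "j1 \<in> c_mor C" "j2 \<in> c_mor C" "a \<in> c_mor C" "c \<in> c_mor C"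
  and t: "c_cod C j2 = c_cod C j1" "c_dom C c = c_dom C a" "c_cod C a = c_dom C j1" "c_cod C c = c_dom C j2"
  shows "col j1 j2 a c \<in> hom C (c_dom C a) (c_cod C j1)"
  using m t unfolding col_def hom_iff by simp

lemma row_typ:
  assumes m: "p1 \<in> c_mor C" "p2 \<in> c_mor C" "a \<in> c_mor C" "b \<in> c_mor C"
  and t: "c_dom C p2 = c_dom C p1" "c_cod C b = c_cod C a" "c_dom C a = c_cod C p1" "c_dom C b = c_cod C p2"
  shows "row p1 p2 a b \<in> hom C (c_dom C p1) (c_cod C a)"
  using m t unfolding row_def hom_iff by simp

lemma mat_col:
  assumes bb: "bip p1 p2 k1 k2"
  and m: "j1 \<in> c_mor C" "j2 \<in> c_mor C"
     "a \<in> c_mor C" "b \<in> c_mor C" "c \<in> c_mor C" "d \<in> c_mor C" "x \<in> c_mor C" "y \<in> c_mor C"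
  and t: "c_cod C j2 = c_cod C j1"
     "c_dom C a = c_cod C p1" "c_dom C b = c_cod C p2" "c_dom C c = c_cod C p1" "c_dom C d = c_cod C p2"
     "c_cod C a = c_dom C j1" "c_cod C b = c_dom C j1" "c_cod C c = c_dom C j2" "c_cod C d = c_dom C j2"
     "c_cod C x = c_cod C p1" "c_cod C y = c_cod C p2" "c_dom C y = c_dom C x"
  shows "c_cmp C (mat C p1 p2 j1 j2 a b c d) (col k1 k2 x y) =
     col j1 j2 (c_add C (c_cmp C a x) (c_cmp C b y)) (c_add C (c_cmp C c x) (c_cmp C d y))"
  using bipD[OF bb] m t unfolding mat_def col_def by (simp add: bip_canc[OF bb] addAC)

lemma row_mat:
  assumes bb: "bip q1 q2 j1 j2"
  and m: "p1 \<in> c_mor C" "p2 \<in> c_mor C"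
     "a \<in> c_mor C" "b \<in> c_mor C" "c \<in> c_mor C" "d \<in> c_mor C" "u \<in> c_mor C" "v \<in> c_mor C"
  and t: "c_dom C p2 = c_dom C p1"
     "c_dom C a = c_cod C p1" "c_dom C b = c_cod C p2" "c_dom C c = c_cod C p1" "c_dom C d = c_cod C p2"
     "c_cod C a = c_cod C q1" "c_cod C b = c_cod C q1" "c_cod C c = c_cod C q2" "c_cod C d = c_cod C q2"
     "c_dom C u = c_cod C q1" "c_dom C v = c_cod C q2" "c_cod C v = c_cod C u"
  shows "c_cmp C (row q1 q2 u v) (mat C p1 p2 j1 j2 a b c d) =
     row p1 p2 (c_add C (c_cmp C u a) (c_cmp C v c)) (c_add C (c_cmp C u b) (c_cmp C v d))"
  using bipD[OF bb] m t unfolding mat_def row_def by (simp add: bip_canc[OF bb] addAC)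

lemma col_row:
  assumes m: "p1 \<in> c_mor C" "p2 \<in> c_mor C" "j1 \<in> c_mor C" "j2 \<in> c_mor C"
     "x \<in> c_mor C" "y \<in> c_mor C" "u \<in> c_mor C" "v \<in> c_mor C"
  and t: "c_dom C p2 = c_dom C p1" "c_cod C j2 = c_cod C j1"
     "c_dom C u = c_cod C p1" "c_dom C v = c_cod C p2" "c_cod C v = c_cod C u"
     "c_dom C x = c_cod C u" "c_dom C y = c_cod C u" "c_cod C x = c_dom C j1" "c_cod C y = c_dom C j2"
  shows "c_cmp C (col j1 j2 x y) (row p1 p2 u v) = mat C p1 p2 j1 j2 (c_cmp C x u) (c_cmp C x v) (c_cmp C y u) (c_cmp C y v)"
  using m t unfolding mat_def row_def col_def by (simp add: addAC)

lemma row_col: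
  assumes bb: "bip p1 p2 j1 j2"
  and m: "x \<in> c_mor C" "y \<in> c_mor C" "u \<in> c_mor C" "v \<in> c_mor C"
  and t: "c_dom C u = c_cod C p1" "c_dom C v = c_cod C p2" "c_cod C v = c_cod C u"
     "c_cod C x = c_cod C p1" "c_cod C y = c_cod C p2" "c_dom C y = c_dom C x"
  shows "c_cmp C (row p1 p2 u v) (col j1 j2 x y) = c_add C (c_cmp C u x) (c_cmp C v y)"
  using bipD[OF bb] m t unfolding row_def col_def by (simp add: bip_canc[OF bb] addAC)

lemma cmp_row:
  assumes m: "p1 \<in> c_mor C" "p2 \<in> c_mor C" "u \<in> c_mor C" "v \<in> c_mor C" "f \<in> c_mor C"
  and t: "c_dom C p2 = c_dom C p1"
     "c_dom C u = c_cod C p1" "c_dom C v = c_cod C p2" "c_cod C v = c_cod C u" "c_dom C f = c_cod C u"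
  shows "c_cmp C f (row p1 p2 u v) = row p1 p2 (c_cmp C f u) (c_cmp C f v)"
  using m t unfolding row_def by simp

lemma col_cmp:
  assumes m: "j1 \<in> c_mor C" "j2 \<in> c_mor C" "x \<in> c_mor C" "y \<in> c_mor C" "f \<in> c_mor C"
  and t: "c_cod C j2 = c_cod C j1"
     "c_cod C x = c_dom C j1" "c_cod C y = c_dom C j2" "c_dom C y = c_dom C x" "c_cod C f = c_dom C x"
  shows "c_cmp C (col j1 j2 x y) f = col j1 j2 (c_cmp C x f) (c_cmp C y f)"
  using m t unfolding col_def by simp

lemma sh_col:
  assumes m: "j1 \<in> c_mor C" "j2 \<in> c_mor C" "x \<in> c_mor C" "y \<in> c_mor C"
  and t: "c_cod C j2 = c_cod C j1"
     "c_cod C x = c_dom C j1" "c_cod C y = c_dom C j2" "c_dom C y = c_dom C x"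
  shows "c_shM C (col j1 j2 x y) = col (c_shM C j1) (c_shM C j2) (c_shM C x) (c_shM C y)"
  using m t unfolding col_def by simp

lemma sh_row:
  assumes m: "p1 \<in> c_mor C" "p2 \<in> c_mor C" "u \<in> c_mor C" "v \<in> c_mor C"
  and t: "c_dom C p2 = c_dom C p1"
     "c_dom C u = c_cod C p1" "c_dom C v = c_cod C p2" "c_cod C v = c_cod C u"
  shows "c_shM C (row p1 p2 u v) = row (c_shM C p1) (c_shM C p2) (c_shM C u) (c_shM C v)"
  using m t unfolding row_def by simp

lemma mat_id:
  assumes bb: "bip p1 p2 j1 j2"
  shows "mat C p1 p2 j1 j2 (c_id C (c_cod C p1)) (c_zer C (c_cod C p2) (c_cod C p1))
            (c_zer C (c_cod C p1) (c_cod C p2)) (c_id C (c_cod C p2)) = c_id C (c_dom C p1)"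
  using bipD[OF bb] unfolding mat_def by (simp flip: bipD(14)[OF bb])

end

context ac begin

lemma nangD: assumes "n_angulated C n N"
  shows "3 \<le> n" "N \<subseteq> {S. is_seq C n S}"
    "\<forall>X \<in> c_ob C. triv_seq C n X \<in> N"
    "\<forall>S. is_seq C n S \<longrightarrow> (S \<in> N \<longleftrightarrow> rot C n S \<in> N)"
    "\<forall>S \<in> N. \<forall>T \<in> N. \<forall>f1 f2.
        f1 \<in> hom C (fst S 1) (fst T 1) \<longrightarrow> f2 \<in> hom C (fst S 2) (fst T 2) \<longrightarrow>
        c_cmp C f2 (snd S 1) = c_cmp C (snd T 1) f1 \<longrightarrow>
        (\<exists>\<phi>. \<phi> 1 = f1 \<and> \<phi> 2 = f2 \<and> is_smor C n S T \<phi>)"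
    "\<forall>S T. T \<in> N \<and> is_seq C n S \<and> is_summand C n S T \<longrightarrow> S \<in> N"
  subgoal using assms unfolding n_angulated_def by (elim conjE) assumption
  subgoal using assms unfolding n_angulated_def by (elim conjE) assumption
  subgoal using assms unfolding n_angulated_def by (elim conjE) assumption
  subgoal using assms unfolding n_angulated_def by (elim conjE) assumption
  subgoal using assms unfolding n_angulated_def by (elim conjE) assumption
  subgoal using assms unfolding n_angulated_def by (elim conjE) assumption
  done

lemma zobj_ob[simp]: "c_zobj C \<in> c_ob C"
  using addC unfolding is_additive_def by blast

lemma seqD: assumes "is_seq C n S"
  shows "\<And>i. 1 \<le> i \<Longrightarrow> i \<le> n \<Longrightarrow> fst S i \<in> c_ob C"
   "\<And>i. 1 \<le> i \<Longrightarrow> i < n \<Longrightarrow> snd S i \<in> hom C (fst S i) (fst S (Suc i))"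
   "snd S n \<in> hom C (fst S n) (c_shO C (fst S 1))"
  using assms unfolding is_seq_def by auto

lemma smorD: assumes "is_smor C n S T \<phi>"
  shows "is_seq C n S" "is_seq C n T"
   "\<And>i. 1 \<le> i \<Longrightarrow> i \<le> n \<Longrightarrow> \<phi> i \<in> hom C (fst S i) (fst T i)"
   "\<And>i. 1 \<le> i \<Longrightarrow> i < n \<Longrightarrow> c_cmp C (\<phi> (Suc i)) (snd S i) = c_cmp C (snd T i) (\<phi> i)"
   "c_cmp C (c_shM C (\<phi> 1)) (snd S n) = c_cmp C (snd T n) (\<phi> n)"
  using assms unfolding is_smor_def by auto

lemma comp12:
  assumes NA: "n_angulated C n N" and S: "S \<in> N"
  shows "c_cmp C (snd S 2) (snd S 1) = c_zer C (fst S 1) (fst S 3)"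
proof -
  note D = nangD[OF NA]
  have sS: "is_seq C n S" using D(2) S by blast
  define X where "X = fst S 1"
  have X: "X \<in> c_ob C" using seqD(1)[OF sS, of 1] D(1) X_def by simp
  have T: "triv_seq C n X \<in> N" using D(3) X by blast
  have s1: "snd S 1 \<in> hom C X (fst S 2)" using seqD(2)[OF sS, of 1] D(1) X_def by (simp add: numeral_2_eq_2)
  have t1: "fst (triv_seq C n X) 1 = X" "fst (triv_seq C n X) 2 = X" "snd (triv_seq C n X) 1 = c_id C X"
     "fst (triv_seq C n X) 3 = c_zobj C" "snd (triv_seq C n X) 2 = c_zer C X (c_zobj C)"
    using D(1) by (auto simp: triv_seq_def Let_def)
  have ex: "\<exists>\<phi>. \<phi> 1 = c_id C X \<and> \<phi> 2 = snd S 1 \<and> is_smor C n (triv_seq C n X) S \<phi>"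
  proof (rule D(5)[rule_format, OF T S])
    show "c_id C X \<in> hom C (fst (triv_seq C n X) 1) (fst S 1)" using t1 id_h[OF X] X_def by simp
    show "snd S 1 \<in> hom C (fst (triv_seq C n X) 2) (fst S 2)" using t1 s1 by simp
    show "c_cmp C (snd S 1) (snd (triv_seq C n X) 1) = c_cmp C (snd S 1) (c_id C X)"
      using t1 by simp
  qed
  obtain \<phi> where p: "\<phi> 1 = c_id C X" "\<phi> 2 = snd S 1" "is_smor C n (triv_seq C n X) S \<phi>"
    using ex by blast
  have e: "c_cmp C (\<phi> 3) (snd (triv_seq C n X)  2) = c_cmp C (snd S 2) (\<phi> 2)"
    using smorD(4)[OF p(3), of 2] D(1) by (simp add: numeral_eq_Suc)
  have h3: "\<phi> 3 \<in> hom C (c_zobj C) (fst S 3)" using smorD(3)[OF p(3), of 3] D(1) t1 by simp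
  show ?thesis using e h3 p(2) t1 X X_def by (simp add: hom_iff)
qed

lemma comp_last:
  assumes NA: "n_angulated C n N" and S: "S \<in> N"
  shows "c_cmp C (snd S n) (snd S (n - 1)) = c_zer C (fst S (n - 1)) (c_shO C (fst S 1))"
proof -
  note D = nangD[OF NA]
  have sS: "is_seq C n S" using D(2) S by blast
  define X where "X = fst S 1"
  have X: "X \<in> c_ob C" using seqD(1)[OF sS, of 1] D(1) X_def by simp
  have T: "triv_seq C n X \<in> N" using D(3) X by blast
  have sT: "is_seq C n (triv_seq C n X)" using D(2) T by blast
  define R where "R = rot C n (triv_seq C n X)"
  have R: "R \<in> N" using D(4) sT T R_def by blast
  have r: "fst R 1 = X" "fst R 2 = c_zobj C" "snd R 1 = c_zer C X (c_zobj C)"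
    "fst R (n - 1) = c_zobj C" "snd R (n - 1) = c_zer C (c_zobj C) (c_shO C X)"
    "snd R n = sgnm C n (c_id C (c_shO C X))"
    using D(1) X by (auto simp: R_def rot_def triv_seq_def Let_def)
  have s1: "snd S 1 \<in> hom C X (fst S 2)" using seqD(2)[OF sS, of 1] D(1) X_def by (simp add: numeral_2_eq_2)
  have o2: "fst S 2 \<in> c_ob C" using seqD(1)[OF sS, of 2] D(1) by simp
  have z2: "c_zer C (fst S 2) (c_zobj C) \<in> hom C (fst S 2) (fst R 2)" using r o2 by (simp add: hom_iff)
  have cc: "c_cmp C (c_zer C (fst S 2) (c_zobj C)) (snd S 1) = c_cmp C (snd R 1) (c_id C X)"
    using r s1 X by (simp add: hom_iff)
  have ex: "\<exists>\<phi>. \<phi> 1 = c_id C X \<and> \<phi> 2 = c_zer C (fst S 2) (c_zobj C) \<and> is_smor C n S R \<phi>"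
  proof (rule D(5)[rule_format, OF S R])
    show "c_id C X \<in> hom C (fst S 1) (fst R 1)" using r id_h[OF X] X_def by simp
  qed (use z2 cc in auto)
  obtain \<phi> where p: "\<phi> 1 = c_id C X" "\<phi> 2 = c_zer C (fst S 2) (c_zobj C)" "is_smor C n S R \<phi>"
    using ex by blast
  have e: "c_cmp C (\<phi> (Suc (n - 1))) (snd S (n - 1)) = c_cmp C (snd R (n - 1)) (\<phi> (n - 1))"
    using smorD(4)[OF p(3), of "n - 1"] D(1) by simp
  have hn1: "\<phi> (n - 1) \<in> hom C (fst S (n - 1)) (c_zobj C)"
    using smorD(3)[OF p(3), of "n - 1"] D(1) r by simp
  have hn: "\<phi> n \<in> hom C (fst S n) (fst R n)"
    using smorD(3)[OF p(3), of "n"] D(1) by simp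
  have sn1: "snd S (n - 1) \<in> hom C (fst S (n - 1)) (fst S n)"
    using seqD(2)[OF sS, of "n - 1"] D(1) by simp
  have sn: "snd S n \<in> hom C (fst S n) (c_shO C X)"
    using seqD(3)[OF sS] X_def by simp
  have Rn: "fst R n = c_shO C X" using D(1) by (simp add: R_def rot_def triv_seq_def Let_def)
  have en: "snd S n = c_cmp C (snd R n) (\<phi> n)"
    using smorD(5)[OF p(3)] p(1) X sn by (simp add: hom_iff)
  have SS: "Suc (n - 1) = n" using D(1) by simp
  have z: "c_cmp C (\<phi> n) (snd S (n - 1)) = c_zer C (fst S (n - 1)) (c_shO C X)"
    using e SS r hn1 X by (simp add: hom_iff)
  have o: "fst S (n - 1) \<in> c_ob C" using seqD(1)[OF sS, of "n - 1"] D(1) by simp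
  show ?thesis using en z hn sn1 Rn r X X_def o
    by (simp add: hom_iff sgnm_def)
qed

end


context ac begin
lemma mat_id_dsum[simp]: "X \<in> c_ob C \<Longrightarrow> Y \<in> c_ob C \<Longrightarrow>
  mat C (c_pr1 C X Y) (c_pr2 C X Y) (c_in1 C X Y) (c_in2 C X Y) (c_id C X) (c_zer C Y X) (c_zer C X Y) (c_id C Y)
  = c_id C (c_dsum C X Y)"
  using mat_id[OF bip_dsum[of X Y]] by simp
end

locale lem = ac C for C :: "('o,'m) acat" +
  fixes n :: nat and N :: "('o,'m) nseq set"
    and A B :: "nat \<Rightarrow> 'o" and \<alpha> \<beta> \<phi> :: "nat \<Rightarrow> 'm"
  assumes n3: "n \<ge> 3"
    and NA: "n_angulated C n N"
    and SA: "(A, \<alpha>) \<in> N"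
    and SB: "(B, \<beta>) \<in> N"
    and B1: "B 1 = A 1"
    and ph2: "\<phi> 2 \<in> hom C (A 2) (B 2)"
    and c12: "c_cmp C (\<phi> 2) (\<alpha> 1) = \<beta> 1"
    and ph1: "\<phi> 1 = c_id C (A 1)"
    and sm: "is_smor C n (A, \<alpha>) (B, \<beta>) \<phi>"
    and KN: "cone C n (A, \<alpha>) (B, \<beta>) \<phi> \<in> N"
begin

lemma sA: "is_seq C n (A, \<alpha>)" using smorD(1)[OF sm] .
lemma sB: "is_seq C n (B, \<beta>)" using smorD(2)[OF sm] .

lemma obA[simp]: "1 \<le> i \<Longrightarrow> i \<le> n \<Longrightarrow> A i \<in> c_ob C" using seqD(1)[OF sA] by simp
lemma obB[simp]: "1 \<le> i \<Longrightarrow> i \<le> n \<Longrightarrow> B i \<in> c_ob C" using seqD(1)[OF sB] by simp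
lemma obA1[simp]: "A 1 \<in> c_ob C" using n3 by simp

lemma aH: "1 \<le> i \<Longrightarrow> i < n \<Longrightarrow> \<alpha> i \<in> hom C (A i) (A (Suc i))" using seqD(2)[OF sA] by simp
lemma bH: "1 \<le> i \<Longrightarrow> i < n \<Longrightarrow> \<beta> i \<in> hom C (B i) (B (Suc i))" using seqD(2)[OF sB] by simp
lemma pH: "1 \<le> i \<Longrightarrow> i \<le> n \<Longrightarrow> \<phi> i \<in> hom C (A i) (B i)" using smorD(3)[OF sm] by simp
lemma aM[simp]: "1 \<le> i \<Longrightarrow> i < n \<Longrightarrow> \<alpha> i \<in> c_mor C"
  and aD[simp]: "1 \<le> i \<Longrightarrow> i < n \<Longrightarrow> c_dom C (\<alpha> i) = A i"
  and aC[simp]: "1 \<le> i \<Longrightarrow> i < n \<Longrightarrow> c_cod C (\<alpha> i) = A (Suc i)"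
  using aH by (auto simp: hom_iff)
lemma bM[simp]: "1 \<le> i \<Longrightarrow> i < n \<Longrightarrow> \<beta> i \<in> c_mor C"
  and bD[simp]: "1 \<le> i \<Longrightarrow> i < n \<Longrightarrow> c_dom C (\<beta> i) = B i"
  and bC[simp]: "1 \<le> i \<Longrightarrow> i < n \<Longrightarrow> c_cod C (\<beta> i) = B (Suc i)"
  using bH by (auto simp: hom_iff)
lemma pM[simp]: "1 \<le> i \<Longrightarrow> i \<le> n \<Longrightarrow> \<phi> i \<in> c_mor C"
  and pD[simp]: "1 \<le> i \<Longrightarrow> i \<le> n \<Longrightarrow> c_dom C (\<phi> i) = A i"
  and pC[simp]: "1 \<le> i \<Longrightarrow> i \<le> n \<Longrightarrow> c_cod C (\<phi> i) = B i"
  using pH by (auto simp: hom_iff)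
lemma anM[simp]: "\<alpha> n \<in> c_mor C" and anD[simp]: "c_dom C (\<alpha> n) = A n"
  and anC[simp]: "c_cod C (\<alpha> n) = c_shO C (A 1)"
  using seqD(3)[OF sA] by (auto simp: hom_iff)
lemma bnM[simp]: "\<beta> n \<in> c_mor C" and bnD[simp]: "c_dom C (\<beta> n) = B n"
  and bnC[simp]: "c_cod C (\<beta> n) = c_shO C (A 1)"
  using seqD(3)[OF sB] B1 by (auto simp: hom_iff)

lemma sq: "1 \<le> i \<Longrightarrow> i < n \<Longrightarrow> c_cmp C (\<phi> (Suc i)) (\<alpha> i) = c_cmp C (\<beta> i) (\<phi> i)"
  using smorD(4)[OF sm] by simp
lemma bpn[simp]: "c_cmp C (\<beta> n) (\<phi> n) = \<alpha> n"
  using smorD(5)[OF sm] ph1 n3 by simp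
lemma a21[simp]: "c_cmp C (\<alpha> 2) (\<alpha> 1) = c_zer C (A 1) (A 3)"
  using comp12[OF NA SA] by simp
lemma bb'[simp]: "c_cmp C (\<beta> n) (\<beta> (n - Suc 0)) = c_zer C (B (n - Suc 0)) (c_shO C (A (Suc 0)))"
  using comp_last[OF NA SB] B1 by simp
lemma bb[simp]: "c_cmp C (\<beta> n) (\<beta> (n - 1)) = c_zer C (B (n - 1)) (c_shO C (A 1))"
  using comp_last[OF NA SB] B1 by simp

lemma nfacts[simp]: "Suc (n - 1) = n" "Suc (Suc (n - 1)) = Suc n" "even (n - 1) \<longleftrightarrow> odd n" "n - 1 \<noteq> 1"
  "(n - 1 < n) = True" "1 \<le> n - 1" "(n - 1 = n) = False" "(n = n - 1) = False" "(n < n - 1) = False"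
  "(n - 1 < n - 1) = False" "(n - 1 = 1) = False" "(n = 1) = False"
  "(n - Suc 0 = Suc 0) = False" "(n = n - Suc 0) = False" "(n < n - Suc 0) = False" "(n - Suc 0 = n) = False"
  "Suc (n - Suc 0) = n" "(n - Suc 0 < n) = True" "(n = Suc 0) = False" "(n = 0) = False"
  "even (n - Suc 0) \<longleftrightarrow> odd n" "Suc (Suc (n - Suc 0)) = Suc n"
  using n3 by auto
lemma B1s[simp]: "B (Suc 0) = A (Suc 0)" using B1 by simp

abbreviation "L \<equiv> lem_seq C n A \<alpha> B \<beta> \<phi>"
abbreviation "K \<equiv> cone C n (A, \<alpha>) (B, \<beta>) \<phi>"

lemma fL1: "fst L 1 = A 2" by (simp add: lem_seq_def)
lemma fLm: "1 < k \<Longrightarrow> k < n \<Longrightarrow> fst L k = c_dsum C (A (Suc k)) (B k)" by (simp add: lem_seq_def)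
lemma fLn: "fst L n = B n" using n3 by (simp add: lem_seq_def)
lemma sL1: "snd L 1 = col (c_in1 C (A 3) (B 2)) (c_in2 C (A 3) (B 2)) (c_neg C (\<alpha> 2)) (\<phi> 2)"
  by (simp add: lem_seq_def col_def del: neg_cmpr neg_cmpl)
lemma sLm: "1 < j \<Longrightarrow> j < n - 1 \<Longrightarrow> snd L j =
   mat C (c_pr1 C (A (Suc j)) (B j)) (c_pr2 C (A (Suc j)) (B j))
     (c_in1 C (A (Suc (Suc j))) (B (Suc j))) (c_in2 C (A (Suc (Suc j))) (B (Suc j)))
     (\<alpha> (Suc j)) (c_zer C (B j) (A (Suc (Suc j)))) (sgnm C j (\<phi> (Suc j))) (\<beta> j)"
  by (simp add: lem_seq_def matD_def)
lemma sLl: "snd L (n - 1) = row (c_pr1 C (A n) (B (n - 1))) (c_pr2 C (A n) (B (n - 1)))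
     (sgnm C (Suc n) (\<phi> n)) (\<beta> (n - 1))"
  using n3 by (simp add: lem_seq_def row_def)
lemma sLn: "snd L n = c_cmp C (c_shM C (\<alpha> 1)) (\<beta> n)"
  using n3 by (simp add: lem_seq_def)

lemma fK: "1 \<le> i \<Longrightarrow> i < n \<Longrightarrow> fst K i = c_dsum C (A (Suc i)) (B i)"
  by (simp add: cone_def Let_def)
lemma fKn: "fst K n = c_dsum C (c_shO C (A 1)) (B n)"
  by (simp add: cone_def Let_def)
lemma sKm: assumes "1 \<le> i" "i < n - 1" shows "snd K i =
   mat C (c_pr1 C (A (Suc i)) (B i)) (c_pr2 C (A (Suc i)) (B i))
     (c_in1 C (A (Suc (Suc i))) (B (Suc i))) (c_in2 C (A (Suc (Suc i))) (B (Suc i)))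
     (c_neg C (\<alpha> (Suc i))) (c_zer C (B i) (A (Suc (Suc i)))) (\<phi> (Suc i)) (\<beta> i)"
proof -
  have "i < n" "Suc i < n" "Suc i \<noteq> n" using assms by arith+
  then show ?thesis by (simp add: cone_def Let_def matD_def)
qed
lemma sKl: "snd K (n - 1) =
   mat C (c_pr1 C (A n) (B (n - 1))) (c_pr2 C (A n) (B (n - 1)))
     (c_in1 C (c_shO C (A 1)) (B n)) (c_in2 C (c_shO C (A 1)) (B n))
     (c_neg C (\<alpha> n)) (c_zer C (B (n - 1)) (c_shO C (A 1))) (\<phi> n) (\<beta> (n - 1))"
  using n3 by (simp add: cone_def Let_def matD_def)
lemma sKn: "snd K n =
   mat C (c_pr1 C (c_shO C (A 1)) (B n)) (c_pr2 C (c_shO C (A 1)) (B n))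
     (c_shM C (c_in1 C (A 2) (A 1))) (c_shM C (c_in2 C (A 2) (A 1)))
     (c_neg C (c_shM C (\<alpha> 1))) (c_zer C (B n) (c_shO C (A 2))) (c_id C (c_shO C (A 1))) (\<beta> n)"
  using n3 ph1 by (simp add: cone_def Let_def B1)

end

context lem begin

definition Mi where "Mi i = mat C (c_pr1 C (A (Suc i)) (B i)) (c_pr2 C (A (Suc i)) (B i))
   (c_in1 C (A (Suc i)) (B i)) (c_in2 C (A (Suc i)) (B i))
   (sgnm C i (c_id C (A (Suc i)))) (c_zer C (B i) (A (Suc i))) (c_zer C (A (Suc i)) (B i)) (c_id C (B i))"

definition F where "F i = (if i = 1 then col (c_in1 C (A 2) (A 1)) (c_in2 C (A 2) (A 1)) (c_id C (A 2)) (c_zer C (A 2) (A 1))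
   else if i < n then Mi i
   else col (c_in1 C (c_shO C (A 1)) (B n)) (c_in2 C (c_shO C (A 1)) (B n)) (c_neg C (\<beta> n)) (c_id C (B n)))"
definition G where "G i = (if i = 1 then row (c_pr1 C (A 2) (A 1)) (c_pr2 C (A 2) (A 1)) (c_id C (A 2)) (\<alpha> 1)
   else if i < n then Mi i
   else row (c_pr1 C (c_shO C (A 1)) (B n)) (c_pr2 C (c_shO C (A 1)) (B n)) (c_zer C (c_shO C (A 1)) (B n)) (c_id C (B n)))"

lemma F1: "F 1 = col (c_in1 C (A 2) (A 1)) (c_in2 C (A 2) (A 1)) (c_id C (A 2)) (c_zer C (A 2) (A 1))"
  by (simp add: F_def)
lemma Fm: "1 < i \<Longrightarrow> i < n \<Longrightarrow> F i = Mi i" by (simp add: F_def)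
lemma Fn: "F n = col (c_in1 C (c_shO C (A 1)) (B n)) (c_in2 C (c_shO C (A 1)) (B n)) (c_neg C (\<beta> n)) (c_id C (B n))"
  by (simp add: F_def)
lemma G1: "G 1 = row (c_pr1 C (A 2) (A 1)) (c_pr2 C (A 2) (A 1)) (c_id C (A 2)) (\<alpha> 1)"
  by (simp add: G_def)
lemma Gm: "1 < i \<Longrightarrow> i < n \<Longrightarrow> G i = Mi i" by (simp add: G_def)
lemma Gn: "G n = row (c_pr1 C (c_shO C (A 1)) (B n)) (c_pr2 C (c_shO C (A 1)) (B n)) (c_zer C (c_shO C (A 1)) (B n)) (c_id C (B n))"
  by (simp add: G_def)

lemma col_mor[simp]: "j1 \<in> c_mor C \<Longrightarrow> j2 \<in> c_mor C \<Longrightarrow> a \<in> c_mor C \<Longrightarrow> c \<in> c_mor C \<Longrightarrow>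
  c_cod C j2 = c_cod C j1 \<Longrightarrow> c_dom C c = c_dom C a \<Longrightarrow> c_cod C a = c_dom C j1 \<Longrightarrow> c_cod C c = c_dom C j2 \<Longrightarrow>
  col j1 j2 a c \<in> c_mor C \<and> c_dom C (col j1 j2 a c) = c_dom C a \<and> c_cod C (col j1 j2 a c) = c_cod C j1"
  using col_typ by (simp add: hom_iff)
lemma row_mor[simp]: "p1 \<in> c_mor C \<Longrightarrow> p2 \<in> c_mor C \<Longrightarrow> a \<in> c_mor C \<Longrightarrow> b \<in> c_mor C \<Longrightarrow>
  c_dom C p2 = c_dom C p1 \<Longrightarrow> c_cod C b = c_cod C a \<Longrightarrow> c_dom C a = c_cod C p1 \<Longrightarrow> c_dom C b = c_cod C p2 \<Longrightarrow>
  row p1 p2 a b \<in> c_mor C \<and> c_dom C (row p1 p2 a b) = c_dom C p1 \<and> c_cod C (row p1 p2 a b) = c_cod C a"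
  using row_typ by (simp add: hom_iff)
lemma mat_mor[simp]: "p1 \<in> c_mor C \<Longrightarrow> p2 \<in> c_mor C \<Longrightarrow> j1 \<in> c_mor C \<Longrightarrow> j2 \<in> c_mor C \<Longrightarrow>
     a \<in> c_mor C \<Longrightarrow> b \<in> c_mor C \<Longrightarrow> c \<in> c_mor C \<Longrightarrow> d \<in> c_mor C \<Longrightarrow>
  c_dom C p2 = c_dom C p1 \<Longrightarrow> c_cod C j2 = c_cod C j1 \<Longrightarrow>
     c_dom C a = c_cod C p1 \<Longrightarrow> c_dom C b = c_cod C p2 \<Longrightarrow> c_dom C c = c_cod C p1 \<Longrightarrow> c_dom C d = c_cod C p2 \<Longrightarrow>
     c_cod C a = c_dom C j1 \<Longrightarrow> c_cod C b = c_dom C j1 \<Longrightarrow> c_cod C c = c_dom C j2 \<Longrightarrow> c_cod C d = c_dom C j2 \<Longrightarrow>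
  mat C p1 p2 j1 j2 a b c d \<in> c_mor C \<and> c_dom C (mat C p1 p2 j1 j2 a b c d) = c_dom C p1 \<and> c_cod C (mat C p1 p2 j1 j2 a b c d) = c_cod C j1"
  using mat_typ[of p1 p2 j1 j2 a b c d] by (simp add: hom_iff)

declare B1[simp]

lemmas mrules = mat_mat mat_col row_mat col_row row_col sh_col sh_row

lemma fsq_mid: assumes i: "1 < i" "i < n - 1"
  shows "c_cmp C (F (Suc i)) (snd L i) = c_cmp C (snd K i) (F i)"
proof -
  have f: "1 \<le> i" "i < n" "1 \<le> Suc i" "Suc i < n" "Suc (Suc i) \<le> n" "i \<le> n" "Suc i \<le> n" "1 < Suc i" "i \<noteq> 1"
    using i by arith+
  show ?thesis using f i by (simp add: Fm sLm sKm Mi_def mrules sgnm_def)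
qed



lemma fsq_1: "c_cmp C (F 2) (snd L 1) = c_cmp C (snd K 1) (F 1)"
proof -
  have f: "1 < (2::nat)" "2 < n" "1 < n - 1" "(1::nat) < n" using n3 by arith+
  have e: "F 2 = Mi 2" "snd K 1 = mat C (c_pr1 C (A 2) (B 1)) (c_pr2 C (A 2) (B 1))
     (c_in1 C (A 3) (B 2)) (c_in2 C (A 3) (B 2))
     (c_neg C (\<alpha> 2)) (c_zer C (B 1) (A 3)) (\<phi> 2) (\<beta> 1)"
    using Fm[of 2] sKm[of 1] f by (simp_all del: One_nat_def B1)
  show ?thesis unfolding e F1 sL1 Mi_def using f by (simp add: mrules sgnm_def del: One_nat_def)
qed

lemma fsq_l: "c_cmp C (F n) (snd L (n - 1)) = c_cmp C (snd K (n - 1)) (F (n - 1))"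
proof -
  have f: "1 < n - 1" "n - 1 < n" using n3 by arith+
  have e: "F (n - 1) = Mi (n - 1)" by (rule Fm) (use f in auto)
  show ?thesis unfolding e Fn sLl sKl Mi_def using f by (simp add: mrules sgnm_def)
qed

lemma fsq_n: "c_cmp C (c_shM C (F 1)) (snd L n) = c_cmp C (snd K n) (F n)"
  unfolding F1 Fn sLn sKn using n3 by (simp add: mrules col_cmp del: One_nat_def)

lemma gsq_mid: assumes i: "1 < i" "i < n - 1"
  shows "c_cmp C (G (Suc i)) (snd K i) = c_cmp C (snd L i) (G i)"
proof -
  have f: "1 \<le> i" "i < n" "1 \<le> Suc i" "Suc i < n" "Suc (Suc i) \<le> n" "i \<le> n" "Suc i \<le> n" "1 < Suc i" "i \<noteq> 1"
    using i by arith+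
  show ?thesis using f i by (simp add: Gm sLm sKm Mi_def mrules sgnm_def)
qed

lemma gsq_1: "c_cmp C (G 2) (snd K 1) = c_cmp C (snd L 1) (G 1)"
proof -
  have f: "1 < (2::nat)" "2 < n" "1 < n - 1" "(1::nat) < n" using n3 by arith+
  have e: "G 2 = Mi 2" "snd K 1 = mat C (c_pr1 C (A 2) (B 1)) (c_pr2 C (A 2) (B 1))
     (c_in1 C (A 3) (B 2)) (c_in2 C (A 3) (B 2))
     (c_neg C (\<alpha> 2)) (c_zer C (B 1) (A 3)) (\<phi> 2) (\<beta> 1)"
    using Gm[of 2] sKm[of 1] f by (simp_all del: One_nat_def B1)
  show ?thesis unfolding e G1 sL1 Mi_def using f c12 by (simp add: mrules sgnm_def del: One_nat_def)
qed

lemma gsq_l: "c_cmp C (G n) (snd K (n - 1)) = c_cmp C (snd L (n - 1)) (G (n - 1))"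
proof -
  have f: "1 < n - 1" "n - 1 < n" using n3 by arith+
  have e: "G (n - 1) = Mi (n - 1)" by (rule Gm) (use f in auto)
  show ?thesis unfolding e Gn sLl sKl Mi_def using f by (simp add: mrules sgnm_def)
qed

lemma gsq_n: "c_cmp C (c_shM C (G 1)) (snd K n) = c_cmp C (snd L n) (G n)"
  unfolding G1 Gn sLn sKn using n3 by (simp add: mrules cmp_row del: One_nat_def)


lemma obA1s[simp]: "A (Suc 0) \<in> c_ob C" using n3 by simp
lemma obBn[simp]: "B n \<in> c_ob C" and obAn[simp]: "A n \<in> c_ob C" using n3 by auto

lemma icases: "1 \<le> i \<Longrightarrow> i \<le> n \<Longrightarrow> i = 1 \<or> (1 < i \<and> i < n - 1) \<or> i = n - 1 \<or> i = n"
  by arith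

lemma typF: assumes i: "1 \<le> i" "i \<le> n" shows "F i \<in> hom C (fst L i) (fst K i)"
proof -
  consider "i = 1" | "1 < i" "i < n" | "i = n" using i by arith
  then show ?thesis
  proof cases
    case 1
    then show ?thesis using fK[of 1] n3 unfolding hom_iff by (simp add: F1 fL1 del: One_nat_def)
  next
    case 2
    then show ?thesis using fK[of i] fLm[of i] unfolding hom_iff by (simp add: Fm Mi_def sgnm_def)
  next
    case 3
    then show ?thesis unfolding hom_iff by (simp add: Fn fLn fKn)
  qed
qed

lemma typG: assumes i: "1 \<le> i" "i \<le> n" shows "G i \<in> hom C (fst K i) (fst L i)"
proof -
  consider "i = 1" | "1 < i" "i < n" | "i = n" using i by arith
  then show ?thesis
  proof cases
    case 1
    then show ?thesis using fK[of 1] n3 unfolding hom_iff by (simp add: G1 fL1 del: One_nat_def)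
  next
    case 2
    then show ?thesis using fK[of i] fLm[of i] unfolding hom_iff by (simp add: Gm Mi_def sgnm_def)
  next
    case 3
    then show ?thesis unfolding hom_iff by (simp add: Gn fLn fKn)
  qed
qed

lemma retr: assumes i: "1 \<le> i" "i \<le> n" shows "c_cmp C (G i) (F i) = c_id C (fst L i)"
proof -
  consider "i = 1" | "1 < i" "i < n" | "i = n" using i by arith
  then show ?thesis
  proof cases
    case 1
    then show ?thesis using n3 by (simp add: F1 G1 fL1 mrules del: One_nat_def)
  next
    case 2
    then show ?thesis using fLm[of i] by (simp add: Fm Gm Mi_def sgnm_def mrules)
  next
    case 3
    then show ?thesis by (simp add: Fn Gn fLn mrules)
  qed
qed

lemma seqL: "is_seq C n L"
  unfolding is_seq_def
proof (intro conjI ballI)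
  fix i assume "i \<in> {1..n}"
  then have i: "1 \<le> i" "i \<le> n" by auto
  consider "i = 1" | "1 < i" "i < n" | "i = n" using i by arith
  then show "fst L i \<in> c_ob C"
  proof cases
    case 1 then show ?thesis using n3 by (simp add: fL1 del: One_nat_def)
  next
    case 2 then show ?thesis by (simp add: fLm)
  next
    case 3 then show ?thesis by (simp add: fLn)
  qed
next
  fix i assume "i \<in> {1..<n}"
  then have i: "1 \<le> i" "i < n" by auto
  consider "i = 1" | "1 < i" "i < n - 1" | "i = n - 1" "1 < i" using i n3 by arith
  then show "snd L i \<in> hom C (fst L i) (fst L (Suc i))"
  proof cases
    case 1
    have f: "1 < (2::nat)" "2 < n" using n3 by arith+
    have e: "fst L 2 = c_dsum C (A 3) (B 2)" using fLm[of 2] f by (simp del: One_nat_def B1)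
    show ?thesis unfolding 1 e[folded Suc_1] unfolding hom_iff sL1 fL1 using f by (simp del: One_nat_def)
  next
    case 2
    then show ?thesis using fLm[of i] fLm[of "Suc i"] unfolding hom_iff by (simp add: sLm sgnm_def)
  next
    case 3
    show ?thesis using fLm[of "n - 1"] 3 unfolding hom_iff 3(1) sLl by (simp add: fLn sgnm_def)
  qed
next
  show "snd L n \<in> hom C (fst L n) (c_shO C (fst L 1))"
    unfolding hom_iff sLn fLn fL1 using n3 by (simp del: One_nat_def)
qed

lemma seqK: "is_seq C n K" using nangD(2)[OF NA] KN by blast

lemma smF: "is_smor C n L K F"
  unfolding is_smor_def
proof (intro conjI ballI seqL seqK)
  fix i assume "i \<in> {1..n}" then show "F i \<in> hom C (fst L i) (fst K i)" using typF by auto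
next
  fix i assume "i \<in> {1..<n}"
  then have i: "1 \<le> i" "i < n" by auto
  consider "i = 1" | "1 < i" "i < n - 1" | "i = n - 1" "1 < i" using i n3 by arith
  then show "c_cmp C (F (Suc i)) (snd L i) = c_cmp C (snd K i) (F i)"
  proof cases
    case 1 then show ?thesis using fsq_1 by (simp add: numeral_2_eq_2 del: One_nat_def)
  next
    case 2 then show ?thesis using fsq_mid by simp
  next
    case 3 then show ?thesis using fsq_l by simp
  qed
next
  show "c_cmp C (c_shM C (F 1)) (snd L n) = c_cmp C (snd K n) (F n)" by (rule fsq_n)
qed

lemma smG: "is_smor C n K L G"
  unfolding is_smor_def
proof (intro conjI ballI seqL seqK)
  fix i assume "i \<in> {1..n}" then show "G i \<in> hom C (fst K i) (fst L i)" using typG by auto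
next
  fix i assume "i \<in> {1..<n}"
  then have i: "1 \<le> i" "i < n" by auto
  consider "i = 1" | "1 < i" "i < n - 1" | "i = n - 1" "1 < i" using i n3 by arith
  then show "c_cmp C (G (Suc i)) (snd K i) = c_cmp C (snd L i) (G i)"
  proof cases
    case 1 then show ?thesis using gsq_1 by (simp add: numeral_2_eq_2 del: One_nat_def)
  next
    case 2 then show ?thesis using gsq_mid by simp
  next
    case 3 then show ?thesis using gsq_l by simp
  qed
next
  show "c_cmp C (c_shM C (G 1)) (snd K n) = c_cmp C (snd L n) (G n)" by (rule gsq_n)
qed

lemma main: "L \<in> N"
proof -
  have "is_summand C n L K" unfolding is_summand_def
    by (rule exI[of _ F], rule exI[of _ G]) (use smF smG retr in auto)
  then show ?thesis using nangD(6)[OF NA] KN seqL by blast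
qed

end

theorem lemma4p1:
  fixes C :: "('o,'m) acat" and n :: nat and N :: "('o,'m) nseq set"
    and A B :: "nat \<Rightarrow> 'o" and \<alpha> \<beta> \<phi> :: "nat \<Rightarrow> 'm"
  assumes "n \<ge> 3"
    and "n_angulated C n N"
    and "(A, \<alpha>) \<in> N"
    and "(B, \<beta>) \<in> N"
    and "B 1 = A 1"
    and "\<phi> 2 \<in> hom C (A 2) (B 2)"
    and "c_cmp C (\<phi> 2) (\<alpha> 1) = \<beta> 1"
    and "\<phi> 1 = c_id C (A 1)"
    and "is_smor C n (A, \<alpha>) (B, \<beta>) \<phi>"
    and "cone C n (A, \<alpha>) (B, \<beta>) \<phi> \<in> N"
  shows "lem_seq C n A \<alpha> B \<beta> \<phi> \<in> N"
proof -
  have a: "is_additive C" "is_shift_auto C" using assms(2) unfolding n_angulated_def by blast+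
  interpret lem C n N A B \<alpha> \<beta> \<phi>
    by (unfold_locales) (use a assms in auto)
  show ?thesis by (rule main)
qed


end
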